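(* Let $\mathbf{k}$ be a field, $Q$ a finite connected quiver, $\Lambda=\mathbf{k}Q/\mathcal{J}^2$ ($\mathcal{J}$ the arrow ideal), $n\ge2$, and assume $\mathcal{C}\subseteq\operatorname{mod}\Lambda$ is an $n$-cluster tilting subcategory. Let $v\in Q_0$. (a) If $\delta^+(v)=2$, then $\delta^-(v)\ge1$. (b) If $\delta^-(v)=2$, then $\delta^+(v)\ge1$. (c) If $\delta^-(v)=\delta^+(v)=2$, then $n=2$.
   Context: Modules are finite-dimensional right modules. $\mathcal{C}$ is $n$-cluster tilting if it is functorially finite and $\mathcal{C}=\{X\mid \operatorname{Ext}^i(X,\mathcal{C})=0\ \forall 0<i<n\}=\{X\mid\operatorname{Ext}^i(\mathcal{C},X)=0\ \forall 0<i<n\}$. $\delta^-(v)$, $\delta^+(v)$ are the numbers of arrows ending, resp. starting, at $v$. *)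

theory Defs
  imports Main
begin

text \<open>Finite-dimensional modules over the radical square zero algebra kQ/J^2, realised
  concretely as representations of the quiver Q (vertex type 'v, arrow type 'a,
  source/target maps src tgt) with every composite of two arrows acting as zero.
  The space at a vertex of dimension d is k^d, encoded as functions nat => 'k vanishing
  at indices >= d; linear maps are matrices nat => nat => 'k vanishing outside their size.\<close>

type_synonym 'k vec = "nat \<Rightarrow> 'k"
type_synonym 'k mat = "nat \<Rightarrow> nat \<Rightarrow> 'k"

definition vspace :: "nat \<Rightarrow> ('k::zero) vec set" where
  "vspace d = {x. \<forall>i. d \<le> i \<longrightarrow> x i = 0}"

definition mat_on :: "nat \<Rightarrow> nat \<Rightarrow> ('k::zero) mat \<Rightarrow> bool" where
  "mat_on r c A \<longleftrightarrow> (\<forall>i j. (r \<le> i \<or> c \<le> j) \<longrightarrow> A i j = 0)"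

definition mvec :: "nat \<Rightarrow> ('k::comm_semiring_1) mat \<Rightarrow> 'k vec \<Rightarrow> 'k vec" where
  "mvec c A x = (\<lambda>i. \<Sum>j<c. A i j * x j)"

definition mmul :: "nat \<Rightarrow> ('k::comm_semiring_1) mat \<Rightarrow> 'k mat \<Rightarrow> 'k mat" where
  "mmul m A B = (\<lambda>i k. \<Sum>j<m. A i j * B j k)"

type_synonym ('v, 'a, 'k) rep = "('v \<Rightarrow> nat) \<times> ('a \<Rightarrow> 'k mat)"
type_synonym ('v, 'k) hom = "'v \<Rightarrow> 'k mat"

definition rdim :: "('v, 'a, 'k) rep \<Rightarrow> 'v \<Rightarrow> nat" where "rdim M = fst M"
definition ract :: "('v, 'a, 'k) rep \<Rightarrow> 'a \<Rightarrow> 'k mat" where "ract M = snd M"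

definition is_rep :: "('a \<Rightarrow> 'v) \<Rightarrow> ('a \<Rightarrow> 'v) \<Rightarrow> ('v, 'a, 'k::field) rep \<Rightarrow> bool" where
  "is_rep src tgt M \<longleftrightarrow>
     (\<forall>a. mat_on (rdim M (tgt a)) (rdim M (src a)) (ract M a)) \<and>
     (\<forall>a b. tgt a = src b \<longrightarrow> mmul (rdim M (tgt a)) (ract M b) (ract M a) = (\<lambda>_ _. 0))"

definition is_hom :: "('a \<Rightarrow> 'v) \<Rightarrow> ('a \<Rightarrow> 'v) \<Rightarrow> ('v, 'a, 'k::field) rep \<Rightarrow> ('v, 'a, 'k) rep
    \<Rightarrow> ('v, 'k) hom \<Rightarrow> bool" where
  "is_hom src tgt M N f \<longleftrightarrow> is_rep src tgt M \<and> is_rep src tgt N \<and>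
     (\<forall>v. mat_on (rdim N v) (rdim M v) (f v)) \<and>
     (\<forall>a. mmul (rdim M (tgt a)) (f (tgt a)) (ract M a) =
          mmul (rdim N (src a)) (ract N a) (f (src a)))"

text \<open>Composition g o f of f : L -> M and g : M -> N (M is the middle object).\<close>
definition hcomp :: "('v, 'a, 'k::field) rep \<Rightarrow> ('v, 'k) hom \<Rightarrow> ('v, 'k) hom \<Rightarrow> ('v, 'k) hom" where
  "hcomp M g f = (\<lambda>v. mmul (rdim M v) (g v) (f v))"

definition zero_hom :: "('v, 'k::zero) hom" where
  "zero_hom = (\<lambda>v i j. 0)"

definition hom_surj :: "('v, 'a, 'k::field) rep \<Rightarrow> ('v, 'a, 'k) rep \<Rightarrow> ('v, 'k) hom \<Rightarrow> bool" where
  "hom_surj M N f \<longleftrightarrow>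
     (\<forall>v. \<forall>y\<in>vspace (rdim N v). \<exists>x\<in>vspace (rdim M v). mvec (rdim M v) (f v) x = y)"

definition exact_at :: "('v, 'a, 'k::field) rep \<Rightarrow> ('v, 'a, 'k) rep \<Rightarrow> ('v, 'k) hom \<Rightarrow> ('v, 'k) hom \<Rightarrow> bool" where
  "exact_at L M f g \<longleftrightarrow>
     (\<forall>v. \<forall>x\<in>vspace (rdim M v).
        (mvec (rdim M v) (g v) x = (\<lambda>_. 0) \<longleftrightarrow> (\<exists>y\<in>vspace (rdim L v). mvec (rdim L v) (f v) y = x)))"

definition projective :: "('a \<Rightarrow> 'v) \<Rightarrow> ('a \<Rightarrow> 'v) \<Rightarrow> ('v, 'a, 'k::field) rep \<Rightarrow> bool" where
  "projective src tgt P \<longleftrightarrow> is_rep src tgt P \<and>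
     (\<forall>X Y g h. is_hom src tgt X Y g \<and> hom_surj X Y g \<and> is_hom src tgt P Y h \<longrightarrow>
        (\<exists>h'. is_hom src tgt P X h' \<and> hcomp X g h' = h))"

definition proj_resolution :: "('a \<Rightarrow> 'v) \<Rightarrow> ('a \<Rightarrow> 'v) \<Rightarrow> ('v, 'a, 'k::field) rep
    \<Rightarrow> (nat \<Rightarrow> ('v, 'a, 'k) rep) \<Rightarrow> (nat \<Rightarrow> ('v, 'k) hom) \<Rightarrow> ('v, 'k) hom \<Rightarrow> bool" where
  "proj_resolution src tgt X P d e \<longleftrightarrow>
     (\<forall>j. projective src tgt (P j)) \<and>
     (\<forall>j. is_hom src tgt (P (Suc j)) (P j) (d j)) \<and>
     is_hom src tgt (P 0) X e \<and> hom_surj (P 0) X e \<and>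
     exact_at (P 1) (P 0) (d 0) e \<and>
     (\<forall>j. exact_at (P (Suc (Suc j))) (P (Suc j)) (d (Suc j)) (d j))"

text \<open>Ext^i(X,Y) = 0 for i >= 1: the i-th cohomology of Hom(P_\<bullet>, Y) vanishes, i.e.
  every cocycle P_i -> Y is a coboundary (for any projective resolution of X).\<close>
definition Ext_zero :: "('a \<Rightarrow> 'v) \<Rightarrow> ('a \<Rightarrow> 'v) \<Rightarrow> nat \<Rightarrow> ('v, 'a, 'k::field) rep \<Rightarrow> ('v, 'a, 'k) rep \<Rightarrow> bool" where
  "Ext_zero src tgt i X Y \<longleftrightarrow>
     (\<forall>P d e. proj_resolution src tgt X P d e \<longrightarrow>
       (\<forall>g. is_hom src tgt (P i) Y g \<and> hcomp (P i) g (d i) = zero_hom \<longrightarrow>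
          (\<exists>h. is_hom src tgt (P (i - 1)) Y h \<and> hcomp (P (i - 1)) h (d (i - 1)) = g)))"

definition contravariantly_finite :: "('a \<Rightarrow> 'v) \<Rightarrow> ('a \<Rightarrow> 'v) \<Rightarrow> ('v, 'a, 'k::field) rep set \<Rightarrow> bool" where
  "contravariantly_finite src tgt C \<longleftrightarrow>
     (\<forall>M. is_rep src tgt M \<longrightarrow> (\<exists>CM f. CM \<in> C \<and> is_hom src tgt CM M f \<and>
        (\<forall>C' g. C' \<in> C \<and> is_hom src tgt C' M g \<longrightarrow>
           (\<exists>h. is_hom src tgt C' CM h \<and> hcomp CM f h = g))))"

definition covariantly_finite :: "('a \<Rightarrow> 'v) \<Rightarrow> ('a \<Rightarrow> 'v) \<Rightarrow> ('v, 'a, 'k::field) rep set \<Rightarrow> bool" where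
  "covariantly_finite src tgt C \<longleftrightarrow>
     (\<forall>M. is_rep src tgt M \<longrightarrow> (\<exists>CM f. CM \<in> C \<and> is_hom src tgt M CM f \<and>
        (\<forall>C' g. C' \<in> C \<and> is_hom src tgt M C' g \<longrightarrow>
           (\<exists>h. is_hom src tgt CM C' h \<and> hcomp CM h f = g))))"

definition functorially_finite :: "('a \<Rightarrow> 'v) \<Rightarrow> ('a \<Rightarrow> 'v) \<Rightarrow> ('v, 'a, 'k::field) rep set \<Rightarrow> bool" where
  "functorially_finite src tgt C \<longleftrightarrow> contravariantly_finite src tgt C \<and> covariantly_finite src tgt C"

definition n_cluster_tilting :: "('a \<Rightarrow> 'v) \<Rightarrow> ('a \<Rightarrow> 'v) \<Rightarrow> nat \<Rightarrow> ('v, 'a, 'k::field) rep set \<Rightarrow> bool" where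
  "n_cluster_tilting src tgt n C \<longleftrightarrow>
     C \<subseteq> {M. is_rep src tgt M} \<and> functorially_finite src tgt C \<and>
     C = {X. is_rep src tgt X \<and> (\<forall>i. 0 < i \<and> i < n \<longrightarrow> (\<forall>Y\<in>C. Ext_zero src tgt i X Y))} \<and>
     C = {X. is_rep src tgt X \<and> (\<forall>i. 0 < i \<and> i < n \<longrightarrow> (\<forall>Y\<in>C. Ext_zero src tgt i Y X))}"

definition quiver_connected :: "('a::finite \<Rightarrow> 'v::finite) \<Rightarrow> ('a \<Rightarrow> 'v) \<Rightarrow> bool" where
  "quiver_connected src tgt \<longleftrightarrow>
     (\<forall>u w. (\<lambda>x y. \<exists>a. (src a = x \<and> tgt a = y) \<or> (src a = y \<and> tgt a = x))\<^sup>*\<^sup>* u w)"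

definition outdeg :: "('a \<Rightarrow> 'v) \<Rightarrow> 'v \<Rightarrow> nat" where
  "outdeg src v = card {a. src a = v}"

definition indeg :: "('a \<Rightarrow> 'v) \<Rightarrow> 'v \<Rightarrow> nat" where
  "indeg tgt v = card {a. tgt a = v}"

end

theory Submission
  imports Defs
begin

lemma sum_split_add: "(\<Sum>k<m+(n::nat). f k) = (\<Sum>k<m. f k) + (\<Sum>k<n. f (m+k))"
  by (induction n) (auto simp: add.assoc)

lemma mmul_assoc: "mmul n (mmul m A B) C = mmul m A (mmul n B C)"
  unfolding mmul_def
  by (auto simp: sum_distrib_left sum_distrib_right mult.assoc intro!: ext sum.swap[THEN trans])

lemma mvec_mmul: "mvec m (mmul n A B) x = mvec n A (mvec m B x)"
  unfolding mmul_def mvec_def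
  by (auto simp: sum_distrib_left sum_distrib_right mult.assoc intro!: ext sum.swap[THEN trans])

lemma mat_on_mmul: "mat_on r x A \<Longrightarrow> mat_on y c B \<Longrightarrow> mat_on r c (mmul m A B)"
  unfolding mat_on_def mmul_def by auto

lemma mvec_vspace: "mat_on r c A \<Longrightarrow> mvec c A x \<in> vspace r"
  unfolding mat_on_def mvec_def vspace_def by auto

definition hid :: "('v, 'a, 'k::field) rep \<Rightarrow> ('v, 'k) hom" where
  "hid M = (\<lambda>v i j. if i = j \<and> i < rdim M v then 1 else 0)"

definition hsub :: "('v, 'k::field) hom \<Rightarrow> ('v, 'k) hom \<Rightarrow> ('v, 'k) hom" where
  "hsub f g = (\<lambda>v i j. f v i j - g v i j)"

definition hadd :: "('v, 'k::field) hom \<Rightarrow> ('v, 'k) hom \<Rightarrow> ('v, 'k) hom" where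
  "hadd f g = (\<lambda>v i j. f v i j + g v i j)"

lemma hcomp_assoc: "hcomp M (hcomp N h g) f = hcomp N h (hcomp M g f)"
  unfolding hcomp_def by (simp add: mmul_assoc)

lemma mmul_sub_left: fixes A :: "('k::comm_ring_1) mat" shows "mmul m (\<lambda>i j. A i j - B i j) C = (\<lambda>i j. mmul m A C i j - mmul m B C i j)"
  unfolding mmul_def by (intro ext) (simp add: left_diff_distrib sum_subtractf)

lemma mmul_sub_right: fixes A :: "('k::comm_ring_1) mat" shows "mmul m C (\<lambda>i j. A i j - B i j) = (\<lambda>i j. mmul m C A i j - mmul m C B i j)"
  unfolding mmul_def by (intro ext) (simp add: right_diff_distrib sum_subtractf)

lemma mmul_add_left: "mmul m (\<lambda>i j. A i j + B i j) C = (\<lambda>i j. mmul m A C i j + mmul m B C i j)"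
  unfolding mmul_def by (auto simp: algebra_simps sum.distrib)

lemma mmul_add_right: "mmul m C (\<lambda>i j. A i j + B i j) = (\<lambda>i j. mmul m C A i j + mmul m C B i j)"
  unfolding mmul_def by (auto simp: algebra_simps sum.distrib)

lemma hcomp_sub_left: "hcomp M (hsub g g') f = hsub (hcomp M g f) (hcomp M g' f)"
  unfolding hcomp_def hsub_def by (simp add: mmul_sub_left)

lemma hcomp_sub_right: "hcomp M g (hsub f f') = hsub (hcomp M g f) (hcomp M g f')"
  unfolding hcomp_def hsub_def by (simp add: mmul_sub_right)

lemma hcomp_add_left: "hcomp M (hadd g g') f = hadd (hcomp M g f) (hcomp M g' f)"
  unfolding hcomp_def hadd_def by (simp add: mmul_add_left)

lemma hcomp_add_right: "hcomp M g (hadd f f') = hadd (hcomp M g f) (hcomp M g f')"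
  unfolding hcomp_def hadd_def by (simp add: mmul_add_right)

lemma hcomp_zero_left: "hcomp M zero_hom f = zero_hom"
  unfolding hcomp_def zero_hom_def mmul_def by simp

lemma hcomp_zero_right: "hcomp M f zero_hom = zero_hom"
  unfolding hcomp_def zero_hom_def mmul_def by simp

lemma sum_if_eq_lt: "(\<Sum>j<(r::nat). if i = j \<and> i < r then X j else 0) = (if i < r then X i else 0)"
  by (cases "i < r") (auto simp: sum.delta)

lemma sum_if_eq_lt': "(\<Sum>j<(r::nat). if j = i \<and> j < r then X j else 0) = (if i < r then X i else 0)"
  by (cases "i < r") (auto simp: sum.delta')

lemma mmul_id_left: "mat_on r c B \<Longrightarrow> mmul r (\<lambda>i j. if i = j \<and> i < r then 1 else 0) B = B"
  unfolding mmul_def mat_on_def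
  by (auto intro!: ext simp: if_distrib[of "\<lambda>x. x * _"] sum_if_eq_lt cong: if_cong)

lemma mmul_id_right: "mat_on r c B \<Longrightarrow> mmul c B (\<lambda>i j. if i = j \<and> i < c then 1 else 0) = B"
  unfolding mmul_def mat_on_def
  by (auto intro!: ext simp: if_distrib[of "\<lambda>x. _ * x"] sum.delta' cong: if_cong)

lemma is_homD:
  assumes "is_hom src tgt M N f"
  shows "is_rep src tgt M" "is_rep src tgt N" "\<And>v. mat_on (rdim N v) (rdim M v) (f v)"
    "\<And>a. mmul (rdim M (tgt a)) (f (tgt a)) (ract M a) = mmul (rdim N (src a)) (ract N a) (f (src a))"
  using assms unfolding is_hom_def by auto

lemma hcomp_id_left: "is_hom src tgt M N f \<Longrightarrow> hcomp N (hid N) f = f"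
  unfolding hcomp_def hid_def
proof -
  assume "is_hom src tgt M N f"
  then have "\<And>v. mat_on (rdim N v) (rdim M v) (f v)" by (rule is_homD)
  then show "(\<lambda>v. mmul (rdim N v) (\<lambda>i j. if i = j \<and> i < rdim N v then 1 else 0) (f v)) = f"
    unfolding mmul_def mat_on_def
    by (auto intro!: ext simp: if_distrib[of "\<lambda>x. x * _"] sum_if_eq_lt cong: if_cong)
qed

lemma hcomp_id_right: "is_hom src tgt M N f \<Longrightarrow> hcomp M f (hid M) = f"
  unfolding hcomp_def hid_def
  by (rule ext, rule mmul_id_right, erule is_homD)

lemma mat_on_id: "mat_on r r (\<lambda>i j. if i = j \<and> i < r then 1 else 0)"
  unfolding mat_on_def by auto

lemma is_hom_id: "is_rep src tgt M \<Longrightarrow> is_hom src tgt M M (hid M)"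
  unfolding is_hom_def hid_def
proof (intro conjI allI)
  fix a assume r: "is_rep src tgt M"
  have m: "mat_on (rdim M (tgt a)) (rdim M (src a)) (ract M a)"
    using r unfolding is_rep_def by auto
  show "mmul (rdim M (tgt a)) (\<lambda>i j. if i = j \<and> i < rdim M (tgt a) then 1 else 0) (ract M a) =
        mmul (rdim M (src a)) (ract M a) (\<lambda>i j. if i = j \<and> i < rdim M (src a) then 1 else 0)"
    using mmul_id_left[OF m] mmul_id_right[OF m] by simp
qed (auto simp: mat_on_def)

lemma is_hom_comp:
  assumes f: "is_hom src tgt L M f" and g: "is_hom src tgt M N g"
  shows "is_hom src tgt L N (hcomp M g f)"
  unfolding is_hom_def
proof (intro conjI allI)
  show "is_rep src tgt L" "is_rep src tgt N" using f g by (auto dest: is_homD)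
  fix v show "mat_on (rdim N v) (rdim L v) (hcomp M g f v)"
    unfolding hcomp_def using is_homD(3)[OF g] is_homD(3)[OF f] by (rule mat_on_mmul)
next
  fix a
  have "mmul (rdim L (tgt a)) (hcomp M g f (tgt a)) (ract L a)
      = mmul (rdim M (tgt a)) (g (tgt a)) (mmul (rdim L (tgt a)) (f (tgt a)) (ract L a))"
    unfolding hcomp_def by (simp add: mmul_assoc)
  also have "\<dots> = mmul (rdim M (tgt a)) (g (tgt a)) (mmul (rdim M (src a)) (ract M a) (f (src a)))"
    using is_homD(4)[OF f] by simp
  also have "\<dots> = mmul (rdim M (src a)) (mmul (rdim M (tgt a)) (g (tgt a)) (ract M a)) (f (src a))"
    by (simp add: mmul_assoc)
  also have "\<dots> = mmul (rdim M (src a)) (mmul (rdim N (src a)) (ract N a) (g (src a))) (f (src a))"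
    using is_homD(4)[OF g] by simp
  also have "\<dots> = mmul (rdim N (src a)) (ract N a) (hcomp M g f (src a))"
    unfolding hcomp_def by (simp add: mmul_assoc)
  finally show "mmul (rdim L (tgt a)) (hcomp M g f (tgt a)) (ract L a) =
      mmul (rdim N (src a)) (ract N a) (hcomp M g f (src a))" .
qed

lemma is_hom_sub:
  assumes f: "is_hom src tgt M N f" and g: "is_hom src tgt M N g"
  shows "is_hom src tgt M N (hsub f g)"
  using f g unfolding is_hom_def hsub_def
  by (auto simp: mmul_sub_left mmul_sub_right mat_on_def)

lemma is_hom_add:
  assumes f: "is_hom src tgt M N f" and g: "is_hom src tgt M N g"
  shows "is_hom src tgt M N (hadd f g)"
  using f g unfolding is_hom_def hadd_def
  by (auto simp: mmul_add_left mmul_add_right mat_on_def)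

lemma is_hom_zero: "is_rep src tgt M \<Longrightarrow> is_rep src tgt N \<Longrightarrow> is_hom src tgt M N zero_hom"
  unfolding is_hom_def zero_hom_def mat_on_def mmul_def by auto

lemma mvec_hcomp: "mvec (rdim L v) (hcomp M g f v) x = mvec (rdim M v) (g v) (mvec (rdim L v) (f v) x)"
  unfolding hcomp_def by (simp add: mvec_mmul)

lemma mvec_sub: fixes A :: "('k::comm_ring_1) mat" shows "mvec c (\<lambda>i j. A i j - B i j) x = (\<lambda>i. mvec c A x i - mvec c B x i)"
  unfolding mvec_def by (auto simp: algebra_simps sum_subtractf)

lemma mvec_add: "mvec c (\<lambda>i j. A i j + B i j) x = (\<lambda>i. mvec c A x i + mvec c B x i)"
  unfolding mvec_def by (auto simp: algebra_simps sum.distrib)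

lemma mvec_id: "x \<in> vspace r \<Longrightarrow> mvec r (\<lambda>i j. if i = j \<and> i < r then 1 else 0) x = x"
  unfolding mvec_def vspace_def
  by (auto intro!: ext simp: if_distrib[of "\<lambda>x. x * _"] sum_if_eq_lt cong: if_cong)

lemma mvec_zero_vec: "mvec c A (\<lambda>_. 0) = (\<lambda>_. 0)"
  unfolding mvec_def by simp


definition dsum :: "('v, 'a, 'k::field) rep \<Rightarrow> ('v, 'a, 'k) rep \<Rightarrow> ('a \<Rightarrow> 'v) \<Rightarrow> ('a \<Rightarrow> 'v) \<Rightarrow> ('v, 'a, 'k) rep" where
  "dsum M N src tgt = (\<lambda>v. rdim M v + rdim N v,
     \<lambda>a i j. if i < rdim M (tgt a) then (if j < rdim M (src a) then ract M a i j else 0)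
            else (if j < rdim M (src a) then 0 else ract N a (i - rdim M (tgt a)) (j - rdim M (src a))))"

lemma rdim_dsum[simp]: "rdim (dsum M N src tgt) v = rdim M v + rdim N v"
  unfolding dsum_def rdim_def by simp

lemma ract_dsum: "ract (dsum M N src tgt) a = (\<lambda>i j. if i < rdim M (tgt a) then (if j < rdim M (src a) then ract M a i j else 0)
            else (if j < rdim M (src a) then 0 else ract N a (i - rdim M (tgt a)) (j - rdim M (src a))))"
  unfolding dsum_def ract_def by simp

definition cp :: "('v, 'a, 'k::field) rep \<Rightarrow> ('v, 'k) hom \<Rightarrow> ('v, 'k) hom \<Rightarrow> ('v, 'k) hom" where
  "cp M f g = (\<lambda>v i j. if j < rdim M v then f v i j else g v i (j - rdim M v))"

definition p2 :: "('v, 'a, 'k::field) rep \<Rightarrow> ('v, 'a, 'k) rep \<Rightarrow> ('v, 'k) hom" where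
  "p2 M N = (\<lambda>v i j. if j = rdim M v + i \<and> i < rdim N v then 1 else 0)"

lemma is_repD:
  assumes "is_rep src tgt M"
  shows "\<And>a. mat_on (rdim M (tgt a)) (rdim M (src a)) (ract M a)"
    "\<And>a b. tgt a = src b \<Longrightarrow> mmul (rdim M (tgt a)) (ract M b) (ract M a) = (\<lambda>_ _. 0)"
  using assms unfolding is_rep_def by auto

lemma mat_onD: "mat_on r c A \<Longrightarrow> r \<le> i \<or> c \<le> j \<Longrightarrow> A i j = 0"
  unfolding mat_on_def by auto

lemma is_rep_dsum:
  assumes M: "is_rep src tgt M" and N: "is_rep src tgt N"
  shows "is_rep src tgt (dsum M N src tgt)"
  unfolding is_rep_def
proof (intro conjI allI impI)
  fix a
  show "mat_on (rdim (dsum M N src tgt) (tgt a)) (rdim (dsum M N src tgt) (src a)) (ract (dsum M N src tgt) a)"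
    using is_repD(1)[OF M, of a] is_repD(1)[OF N, of a]
    unfolding mat_on_def ract_dsum by auto
next
  fix a b assume ab: "tgt a = src b"
  have mM: "mmul (rdim M (tgt a)) (ract M b) (ract M a) = (\<lambda>_ _. 0)" using is_repD(2)[OF M ab] .
  have mN: "mmul (rdim N (tgt a)) (ract N b) (ract N a) = (\<lambda>_ _. 0)" using is_repD(2)[OF N ab] .
  show "mmul (rdim (dsum M N src tgt) (tgt a)) (ract (dsum M N src tgt) b) (ract (dsum M N src tgt) a) = (\<lambda>_ _. 0)"
  proof (intro ext)
    fix i j
    have "mmul (rdim (dsum M N src tgt) (tgt a)) (ract (dsum M N src tgt) b) (ract (dsum M N src tgt) a) i j
      = (\<Sum>k<rdim M (tgt a). ract (dsum M N src tgt) b i k * ract (dsum M N src tgt) a k j)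
        + (\<Sum>k<rdim N (tgt a). ract (dsum M N src tgt) b i (rdim M (tgt a) + k) * ract (dsum M N src tgt) a (rdim M (tgt a) + k) j)"
      unfolding mmul_def by (simp add: sum_split_add)
    also have "\<dots> = 0"
    proof -
      have s1: "(\<Sum>k<rdim M (tgt a). ract (dsum M N src tgt) b i k * ract (dsum M N src tgt) a k j)
          = (if i < rdim M (tgt b) \<and> j < rdim M (src a) then mmul (rdim M (tgt a)) (ract M b) (ract M a) i j else 0)"
        unfolding mmul_def ract_dsum using ab by (cases "i < rdim M (tgt b)"; cases "j < rdim M (src a)"; simp)
      have s2: "(\<Sum>k<rdim N (tgt a). ract (dsum M N src tgt) b i (rdim M (tgt a) + k) * ract (dsum M N src tgt) a (rdim M (tgt a) + k) j)
          = (if \<not> i < rdim M (tgt b) \<and> \<not> j < rdim M (src a) then mmul (rdim N (tgt a)) (ract N b) (ract N a) (i - rdim M (tgt b)) (j - rdim M (src a)) else 0)"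
        unfolding mmul_def ract_dsum using ab by (cases "i < rdim M (tgt b)"; cases "j < rdim M (src a)"; simp)
      show ?thesis unfolding s1 s2 using mM mN by simp
    qed
    finally show "mmul (rdim (dsum M N src tgt) (tgt a)) (ract (dsum M N src tgt) b) (ract (dsum M N src tgt) a) i j = 0" .
  qed
qed

lemma is_hom_cp:
  assumes f: "is_hom src tgt M Z f" and g: "is_hom src tgt N Z g"
  shows "is_hom src tgt (dsum M N src tgt) Z (cp M f g)"
  unfolding is_hom_def
proof (intro conjI allI)
  show "is_rep src tgt (dsum M N src tgt)" using f g by (auto intro: is_rep_dsum dest: is_homD)
  show "is_rep src tgt Z" using f by (auto dest: is_homD)
  fix v show "mat_on (rdim Z v) (rdim (dsum M N src tgt) v) (cp M f g v)"
    using is_homD(3)[OF f, of v] is_homD(3)[OF g, of v] unfolding mat_on_def cp_def by auto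
next
  fix a
  show "mmul (rdim (dsum M N src tgt) (tgt a)) (cp M f g (tgt a)) (ract (dsum M N src tgt) a) =
        mmul (rdim Z (src a)) (ract Z a) (cp M f g (src a))"
  proof (intro ext)
    fix i j
    have "mmul (rdim (dsum M N src tgt) (tgt a)) (cp M f g (tgt a)) (ract (dsum M N src tgt) a) i j
      = (\<Sum>k<rdim M (tgt a). cp M f g (tgt a) i k * ract (dsum M N src tgt) a k j)
        + (\<Sum>k<rdim N (tgt a). cp M f g (tgt a) i (rdim M (tgt a) + k) * ract (dsum M N src tgt) a (rdim M (tgt a) + k) j)"
      unfolding mmul_def by (simp add: sum_split_add)
    also have "\<dots> = mmul (rdim Z (src a)) (ract Z a) (cp M f g (src a)) i j"
    proof (cases "j < rdim M (src a)")
      case True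
      then have "(\<Sum>k<rdim M (tgt a). cp M f g (tgt a) i k * ract (dsum M N src tgt) a k j)
          + (\<Sum>k<rdim N (tgt a). cp M f g (tgt a) i (rdim M (tgt a) + k) * ract (dsum M N src tgt) a (rdim M (tgt a) + k) j)
          = mmul (rdim M (tgt a)) (f (tgt a)) (ract M a) i j"
        unfolding cp_def ract_dsum mmul_def by simp
      also have "\<dots> = mmul (rdim Z (src a)) (ract Z a) (f (src a)) i j" using is_homD(4)[OF f] by simp
      also have "\<dots> = mmul (rdim Z (src a)) (ract Z a) (cp M f g (src a)) i j"
        unfolding cp_def mmul_def using True by simp
      finally show ?thesis .
    next
      case False
      then have "(\<Sum>k<rdim M (tgt a). cp M f g (tgt a) i k * ract (dsum M N src tgt) a k j)
          + (\<Sum>k<rdim N (tgt a). cp M f g (tgt a) i (rdim M (tgt a) + k) * ract (dsum M N src tgt) a (rdim M (tgt a) + k) j)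
          = mmul (rdim N (tgt a)) (g (tgt a)) (ract N a) i (j - rdim M (src a))"
        unfolding cp_def ract_dsum mmul_def by simp
      also have "\<dots> = mmul (rdim Z (src a)) (ract Z a) (g (src a)) i (j - rdim M (src a))" using is_homD(4)[OF g] by simp
      also have "\<dots> = mmul (rdim Z (src a)) (ract Z a) (cp M f g (src a)) i j"
        unfolding cp_def mmul_def using False by simp
      finally show ?thesis .
    qed
    finally show "mmul (rdim (dsum M N src tgt) (tgt a)) (cp M f g (tgt a)) (ract (dsum M N src tgt) a) i j =
        mmul (rdim Z (src a)) (ract Z a) (cp M f g (src a)) i j" .
  qed
qed

lemma is_hom_p1:
  assumes M: "is_rep src tgt M" and N: "is_rep src tgt N"
  shows "is_hom src tgt (dsum M N src tgt) M (hid M)"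
  unfolding is_hom_def
proof (intro conjI allI)
  show "is_rep src tgt (dsum M N src tgt)" using M N by (rule is_rep_dsum)
  show "is_rep src tgt M" by fact
  fix v show "mat_on (rdim M v) (rdim (dsum M N src tgt) v) (hid M v)"
    unfolding mat_on_def hid_def by auto
next
  fix a
  have mo: "mat_on (rdim M (tgt a)) (rdim M (src a)) (ract M a)" using is_repD(1)[OF M] .
  show "mmul (rdim (dsum M N src tgt) (tgt a)) (hid M (tgt a)) (ract (dsum M N src tgt) a) =
        mmul (rdim M (src a)) (ract M a) (hid M (src a))"
  proof (intro ext)
    fix i j
    have "mmul (rdim (dsum M N src tgt) (tgt a)) (hid M (tgt a)) (ract (dsum M N src tgt) a) i j
        = (if i < rdim M (tgt a) \<and> j < rdim M (src a) then ract M a i j else 0)"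
      unfolding mmul_def hid_def ract_dsum rdim_dsum
      by (simp add: if_distrib[of "\<lambda>x. x * _"] sum_if_eq_lt cong: if_cong)
    also have "\<dots> = mmul (rdim M (src a)) (ract M a) (hid M (src a)) i j"
      unfolding mmul_def hid_def using mo
      by (auto simp: if_distrib[of "\<lambda>x. _ * x"] sum_if_eq_lt' mat_on_def cong: if_cong)
    finally show "mmul (rdim (dsum M N src tgt) (tgt a)) (hid M (tgt a)) (ract (dsum M N src tgt) a) i j =
        mmul (rdim M (src a)) (ract M a) (hid M (src a)) i j" .
  qed
qed

lemma sum_if_shift: "(\<Sum>k<(n::nat). if k = m + i \<and> i < r then X k else 0) = (if m + i < n \<and> i < r then X (m + i) else 0)"
  by (cases "m + i < n \<and> i < r") (auto simp: sum.delta)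

lemma is_hom_p2:
  assumes M: "is_rep src tgt M" and N: "is_rep src tgt N"
  shows "is_hom src tgt (dsum M N src tgt) N (p2 M N)"
  unfolding is_hom_def
proof (intro conjI allI)
  show "is_rep src tgt (dsum M N src tgt)" using M N by (rule is_rep_dsum)
  show "is_rep src tgt N" by fact
  fix v show "mat_on (rdim N v) (rdim (dsum M N src tgt) v) (p2 M N v)"
    unfolding mat_on_def p2_def by auto
next
  fix a
  have mo: "mat_on (rdim N (tgt a)) (rdim N (src a)) (ract N a)" using is_repD(1)[OF N] .
  show "mmul (rdim (dsum M N src tgt) (tgt a)) (p2 M N (tgt a)) (ract (dsum M N src tgt) a) =
        mmul (rdim N (src a)) (ract N a) (p2 M N (src a))"
  proof (intro ext)
    fix i j
    have "mmul (rdim (dsum M N src tgt) (tgt a)) (p2 M N (tgt a)) (ract (dsum M N src tgt) a) i j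
        = (if i < rdim N (tgt a) \<and> \<not> j < rdim M (src a) then ract N a i (j - rdim M (src a)) else 0)"
      unfolding mmul_def p2_def ract_dsum rdim_dsum
      by (simp add: if_distrib[of "\<lambda>x. x * _"] sum_if_shift cong: if_cong)
    also have "\<dots> = mmul (rdim N (src a)) (ract N a) (p2 M N (src a)) i j"
    proof (cases "j < rdim M (src a)")
      case True
      then show ?thesis unfolding mmul_def p2_def by auto
    next
      case False
      then have eq: "\<And>ja. (j = rdim M (src a) + ja) = (ja = j - rdim M (src a))" by auto
      show ?thesis unfolding mmul_def p2_def using False mo
        by (auto simp: if_distrib[of "\<lambda>x. _ * x"] mat_on_def eq sum.delta' cong: if_cong)
    qed
    finally show "mmul (rdim (dsum M N src tgt) (tgt a)) (p2 M N (tgt a)) (ract (dsum M N src tgt) a) i j =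
        mmul (rdim N (src a)) (ract N a) (p2 M N (src a)) i j" .
  qed
qed

lemma cp_decomp:
  "hcomp (dsum M N src tgt) (cp M f g) t =
   hadd (hcomp M f (hcomp (dsum M N src tgt) (hid M) t)) (hcomp N g (hcomp (dsum M N src tgt) (p2 M N) t))"
proof (intro ext)
  fix v i j
  have 1: "hcomp (dsum M N src tgt) (cp M f g) t v i j =
     (\<Sum>k<rdim M v. f v i k * t v k j) + (\<Sum>k<rdim N v. g v i k * t v (rdim M v + k) j)"
    unfolding hcomp_def mmul_def rdim_dsum sum_split_add cp_def by simp
  have 2: "hcomp (dsum M N src tgt) (hid M) t v k j = (if k < rdim M v then t v k j else 0)" for k
    unfolding hcomp_def mmul_def hid_def rdim_dsum
    by (auto simp: if_distrib[of "\<lambda>x. x * _"] sum_if_eq_lt cong: if_cong)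
  have 3: "hcomp (dsum M N src tgt) (p2 M N) t v k j = (if k < rdim N v then t v (rdim M v + k) j else 0)" for k
    unfolding hcomp_def mmul_def p2_def rdim_dsum
    by (auto simp: if_distrib[of "\<lambda>x. x * _"] sum_if_shift cong: if_cong)
  have 4: "hcomp M f (hcomp (dsum M N src tgt) (hid M) t) v i j = (\<Sum>k<rdim M v. f v i k * t v k j)"
    unfolding hcomp_def[of M f] mmul_def 2 by (auto intro: sum.cong)
  have 5: "hcomp N g (hcomp (dsum M N src tgt) (p2 M N) t) v i j = (\<Sum>k<rdim N v. g v i k * t v (rdim M v + k) j)"
    unfolding hcomp_def[of N g] mmul_def 3 by (auto intro: sum.cong)
  show "hcomp (dsum M N src tgt) (cp M f g) t v i j = hadd (hcomp M f (hcomp (dsum M N src tgt) (hid M) t))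
      (hcomp N g (hcomp (dsum M N src tgt) (p2 M N) t)) v i j"
    unfolding 1 hadd_def 4 5 by simp
qed

lemma hom_surj_cp:
  fixes f g :: "('v, 'k::field) hom" and M N Z :: "('v, 'a, 'k) rep"
  assumes "\<And>v y. y \<in> vspace (rdim Z v) \<Longrightarrow> \<exists>x1\<in>vspace (rdim M v). \<exists>x2\<in>vspace (rdim N v).
              (\<lambda>i. mvec (rdim M v) (f v) x1 i + mvec (rdim N v) (g v) x2 i) = y"
  shows "hom_surj (dsum M N src tgt) Z (cp M f g)"
  unfolding hom_surj_def
proof (intro allI ballI)
  fix v and y :: "'k vec" assume y: "y \<in> vspace (rdim Z v)"
  obtain x1 x2 where x1: "x1 \<in> vspace (rdim M v)" and x2: "x2 \<in> vspace (rdim N v)"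
    and e: "(\<lambda>i. mvec (rdim M v) (f v) x1 i + mvec (rdim N v) (g v) x2 i) = y"
    using assms[OF y] by blast
  define x where "x = (\<lambda>k. if k < rdim M v then x1 k else x2 (k - rdim M v))"
  have "x \<in> vspace (rdim (dsum M N src tgt) v)"
    using x2 unfolding x_def vspace_def by auto
  moreover have "mvec (rdim (dsum M N src tgt) v) (cp M f g v) x = y"
    unfolding e[symmetric] mvec_def rdim_dsum sum_split_add x_def cp_def by simp
  ultimately show "\<exists>x\<in>vspace (rdim (dsum M N src tgt) v). mvec (rdim (dsum M N src tgt) v) (cp M f g v) x = y" by blast
qed


lemma hsub_self: "hsub f f = zero_hom"
  unfolding hsub_def zero_hom_def by simp

lemma hsub_zero: "hsub f zero_hom = f"
  unfolding hsub_def zero_hom_def by simp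

lemma hadd_zero: "hadd f zero_hom = f"
  unfolding hadd_def zero_hom_def by simp

lemma hcomp_apply: "hcomp M g f v = mmul (rdim M v) (g v) (f v)"
  unfolding hcomp_def by simp

lemma comp_zero_from_image:
  fixes f g :: "('v, 'k::field) hom" and M L :: "('v, 'a, 'k) rep"
  assumes f: "\<And>v. mat_on (rdim M v) (rdim L v) (f v)"
    and z: "\<And>v y. y \<in> vspace (rdim L v) \<Longrightarrow> mvec (rdim M v) (g v) (mvec (rdim L v) (f v) y) = (\<lambda>_. 0)"
  shows "hcomp M g f = zero_hom"
proof (intro ext)
  fix v i c
  show "hcomp M g f v i c = zero_hom v i c"
  proof (cases "c < rdim L v")
    case True
    define y where "y = (\<lambda>k. if k = c then 1 else (0::'k))"
    have y: "y \<in> vspace (rdim L v)" using True unfolding y_def vspace_def by auto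
    have col: "mvec (rdim L v) (f v) y = (\<lambda>k. f v k c)"
      unfolding mvec_def y_def using True
      by (auto simp: if_distrib[of "\<lambda>x. _ * x"] sum.delta' cong: if_cong)
    have "hcomp M g f v i c = mvec (rdim M v) (g v) (\<lambda>k. f v k c) i"
      unfolding hcomp_def mmul_def mvec_def by simp
    then have "hcomp M g f v i c = mvec (rdim M v) (g v) (mvec (rdim L v) (f v) y) i"
      using col by simp
    then show ?thesis using z[OF y] unfolding zero_hom_def by simp
  next
    case False
    then show ?thesis using f[of v] unfolding hcomp_def mmul_def zero_hom_def mat_on_def by auto
  qed
qed

lemma exact_comp_zero:
  fixes f g :: "('v, 'k::field) hom" and M L :: "('v, 'a, 'k) rep"
  assumes f: "is_hom src tgt L M f" and ex: "exact_at L M f g"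
  shows "hcomp M g f = zero_hom"
proof (rule comp_zero_from_image)
  show "\<And>v. mat_on (rdim M v) (rdim L v) (f v)" using f by (rule is_homD)
  fix v and y :: "'k vec" assume y: "y \<in> vspace (rdim L v)"
  have "mvec (rdim L v) (f v) y \<in> vspace (rdim M v)" using is_homD(3)[OF f] by (rule mvec_vspace)
  then show "mvec (rdim M v) (g v) (mvec (rdim L v) (f v) y) = (\<lambda>_. 0)"
    using ex y unfolding exact_at_def by blast
qed

lemma homotopy_step:
  fixes D0 D1 S :: "('v, 'k::field) hom" and A B Cq :: "('v, 'a, 'k) rep"
  assumes projB: "projective src tgt B"
    and D0: "is_hom src tgt B A D0" and D1: "is_hom src tgt Cq B D1" and S: "is_hom src tgt A B S"
    and DD: "hcomp B D0 D1 = zero_hom"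
    and ex: "\<And>v x. x \<in> vspace (rdim B v) \<Longrightarrow> mvec (rdim B v) (D0 v) x = (\<lambda>_. 0) \<Longrightarrow>
               \<exists>y\<in>vspace (rdim Cq v). mvec (rdim Cq v) (D1 v) y = x"
    and DSD: "hcomp B D0 (hcomp A S D0) = D0"
    and SDS: "hcomp A S (hcomp B D0 S) = S"
  shows "\<exists>S'. is_hom src tgt B Cq S' \<and> hcomp Cq D1 S' = hsub (hid B) (hcomp A S D0) \<and>
     hcomp Cq D1 (hcomp B S' D1) = D1 \<and> hcomp B S' (hcomp Cq D1 S') = S'"
proof -
  have repA: "is_rep src tgt A" and repB: "is_rep src tgt B" and repC: "is_rep src tgt Cq"
    using D0 D1 by (auto dest: is_homD)
  define SD where "SD = hcomp A S D0"
  have SDh: "is_hom src tgt B B SD" unfolding SD_def using D0 S by (rule is_hom_comp)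
  define \<pi> where "\<pi> = hsub (hid B) SD"
  have pih: "is_hom src tgt B B \<pi>" unfolding \<pi>_def by (rule is_hom_sub[OF is_hom_id[OF repB] SDh])
  have SDSD: "hcomp B SD SD = SD"
    unfolding SD_def by (simp add: hcomp_assoc DSD)
  have pipi: "hcomp B \<pi> \<pi> = \<pi>"
  proof -
    have "hcomp B \<pi> \<pi> = hsub \<pi> (hcomp B SD \<pi>)"
      unfolding \<pi>_def[of] hcomp_sub_left by (subst hcomp_id_left[OF pih[unfolded \<pi>_def]]) simp
    also have "hcomp B SD \<pi> = zero_hom"
      unfolding \<pi>_def hcomp_sub_right hcomp_id_right[OF SDh] SDSD hsub_self ..
    finally show ?thesis by (simp add: hsub_zero)
  qed
  have piD1: "hcomp B \<pi> D1 = D1"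
    unfolding \<pi>_def hcomp_sub_left hcomp_id_left[OF D1] SD_def hcomp_assoc DD hcomp_zero_right hsub_zero ..
  have piS: "hcomp B \<pi> S = zero_hom"
    unfolding \<pi>_def hcomp_sub_left hcomp_id_left[OF S] SD_def hcomp_assoc SDS hsub_self ..
  have Phi: "is_hom src tgt (dsum Cq A src tgt) B (cp Cq D1 S)" using D1 S by (rule is_hom_cp)
  have surj: "hom_surj (dsum Cq A src tgt) B (cp Cq D1 S)"
  proof (rule hom_surj_cp)
    fix v and y :: "'k vec" assume y: "y \<in> vspace (rdim B v)"
    define x2 where "x2 = mvec (rdim B v) (D0 v) y"
    have x2: "x2 \<in> vspace (rdim A v)" unfolding x2_def using is_homD(3)[OF D0] by (rule mvec_vspace)
    define py where "py = (\<lambda>i. y i - mvec (rdim A v) (S v) x2 i)"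
    have py: "py \<in> vspace (rdim B v)" using y mvec_vspace[OF is_homD(3)[OF S], of v x2]
      unfolding py_def vspace_def by auto
    have e0: "mvec (rdim B v) (D0 v) py = (\<lambda>i. mvec (rdim B v) (D0 v) y i - mvec (rdim B v) (D0 v) (mvec (rdim A v) (S v) x2) i)"
      unfolding py_def mvec_def by (auto simp: algebra_simps sum_subtractf)
    have e1: "mvec (rdim B v) (D0 v) (mvec (rdim A v) (S v) x2) = mvec (rdim B v) (hcomp B D0 (hcomp A S D0) v) y"
      unfolding x2_def mvec_hcomp ..
    have "mvec (rdim B v) (D0 v) py = (\<lambda>_. 0)" unfolding e0 e1 DSD by simp
    then obtain x1 where x1: "x1 \<in> vspace (rdim Cq v)" and e1: "mvec (rdim Cq v) (D1 v) x1 = py"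
      using ex[OF py] by blast
    show "\<exists>x1\<in>vspace (rdim Cq v). \<exists>x2\<in>vspace (rdim A v).
              (\<lambda>i. mvec (rdim Cq v) (D1 v) x1 i + mvec (rdim A v) (S v) x2 i) = y"
      using x1 x2 e1 unfolding py_def by (intro bexI[of _ x1] bexI[of _ x2]) auto
  qed
  obtain t where t: "is_hom src tgt B (dsum Cq A src tgt) t" and tt: "hcomp (dsum Cq A src tgt) (cp Cq D1 S) t = \<pi>"
    using projB Phi surj pih unfolding projective_def by blast
  define t1 where "t1 = hcomp (dsum Cq A src tgt) (hid Cq) t"
  define t2 where "t2 = hcomp (dsum Cq A src tgt) (p2 Cq A) t"
  have t1h: "is_hom src tgt B Cq t1" unfolding t1_def using t is_hom_p1[OF repC repA] by (rule is_hom_comp)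
  have dec: "\<pi> = hadd (hcomp Cq D1 t1) (hcomp A S t2)"
    unfolding tt[symmetric] t1_def t2_def by (rule cp_decomp)
  have key: "hcomp Cq D1 t1 = \<pi>"
  proof -
    have "\<pi> = hcomp B \<pi> \<pi>" using pipi by simp
    also have "\<dots> = hadd (hcomp Cq (hcomp B \<pi> D1) t1) (hcomp A (hcomp B \<pi> S) t2)"
      by (subst (2) dec) (simp add: hcomp_add_right hcomp_assoc)
    also have "\<dots> = hcomp Cq D1 t1" unfolding piD1 piS hcomp_zero_left hadd_zero ..
    finally show ?thesis by simp
  qed
  define S' where "S' = hcomp B t1 \<pi>"
  have S'h: "is_hom src tgt B Cq S'" unfolding S'_def using pih t1h by (rule is_hom_comp)
  have 1: "hcomp Cq D1 S' = \<pi>" unfolding S'_def hcomp_assoc[symmetric] key pipi ..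
  have 2: "hcomp Cq D1 (hcomp B S' D1) = D1" unfolding hcomp_assoc[symmetric] 1 piD1 ..
  have 3: "hcomp B S' (hcomp Cq D1 S') = S'" unfolding 1 unfolding S'_def hcomp_assoc pipi ..
  show ?thesis using S'h 1 2 3 unfolding \<pi>_def SD_def by blast
qed

definition Qr :: "('v, 'a, 'k::field) rep \<Rightarrow> (nat \<Rightarrow> ('v, 'a, 'k) rep) \<Rightarrow> nat \<Rightarrow> ('v, 'a, 'k) rep" where
  "Qr X P j = (case j of 0 \<Rightarrow> X | Suc j' \<Rightarrow> P j')"

definition Dr :: "('v, 'k::field) hom \<Rightarrow> (nat \<Rightarrow> ('v, 'k) hom) \<Rightarrow> nat \<Rightarrow> ('v, 'k) hom" where
  "Dr e d j = (case j of 0 \<Rightarrow> e | Suc j' \<Rightarrow> d j')"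

lemma Qr_simps[simp]: "Qr X P 0 = X" "Qr X P (Suc j) = P j"
  unfolding Qr_def by simp_all

lemma Dr_simps[simp]: "Dr e d 0 = e" "Dr e d (Suc j) = d j"
  unfolding Dr_def by simp_all

lemma res_facts:
  fixes X :: "('v, 'a, 'k::field) rep"
  assumes X: "projective src tgt X" and R: "proj_resolution src tgt X P d e"
  shows "projective src tgt (Qr X P j)"
    and "is_hom src tgt (Qr X P (Suc j)) (Qr X P j) (Dr e d j)"
    and "hcomp (Qr X P (Suc j)) (Dr e d j) (Dr e d (Suc j)) = zero_hom"
    and "\<And>v x. x \<in> vspace (rdim (Qr X P (Suc j)) v) \<Longrightarrow> mvec (rdim (Qr X P (Suc j)) v) (Dr e d j v) x = (\<lambda>_. 0) \<Longrightarrow>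
          \<exists>y\<in>vspace (rdim (Qr X P (Suc (Suc j))) v). mvec (rdim (Qr X P (Suc (Suc j))) v) (Dr e d (Suc j) v) y = x"
proof -
  have ex: "exact_at (Qr X P (Suc (Suc j))) (Qr X P (Suc j)) (Dr e d (Suc j)) (Dr e d j)"
    using R unfolding proj_resolution_def by (cases j) auto
  show "projective src tgt (Qr X P j)" using X R unfolding proj_resolution_def by (cases j) auto
  show h: "is_hom src tgt (Qr X P (Suc j)) (Qr X P j) (Dr e d j)" for j
    using R unfolding proj_resolution_def by (cases j) auto
  show "hcomp (Qr X P (Suc j)) (Dr e d j) (Dr e d (Suc j)) = zero_hom"
    using exact_comp_zero[OF h ex] .
  fix v x assume "x \<in> vspace (rdim (Qr X P (Suc j)) v)" "mvec (rdim (Qr X P (Suc j)) v) (Dr e d j v) x = (\<lambda>_. 0)"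
  then show "\<exists>y\<in>vspace (rdim (Qr X P (Suc (Suc j))) v). mvec (rdim (Qr X P (Suc (Suc j))) v) (Dr e d (Suc j) v) y = x"
    using ex unfolding exact_at_def by blast
qed

lemma homotopy_exists:
  fixes X :: "('v, 'a, 'k::field) rep"
  assumes X: "projective src tgt X" and R: "proj_resolution src tgt X P d e"
  shows "\<exists>S. is_hom src tgt (Qr X P j) (Qr X P (Suc j)) S \<and>
     hcomp (Qr X P (Suc j)) (Dr e d j) (hcomp (Qr X P j) S (Dr e d j)) = Dr e d j \<and>
     hcomp (Qr X P j) S (hcomp (Qr X P (Suc j)) (Dr e d j) S) = S"
proof (induction j)
  case 0
  have e: "is_hom src tgt (P 0) X e" and es: "hom_surj (P 0) X e"
    using R unfolding proj_resolution_def by auto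
  have repX: "is_rep src tgt X" using X unfolding projective_def by auto
  obtain \<sigma> where s: "is_hom src tgt X (P 0) \<sigma>" and es': "hcomp (P 0) e \<sigma> = hid X"
    using X e es is_hom_id[OF repX] unfolding projective_def by blast
  have "hcomp (P 0) e (hcomp X \<sigma> e) = e"
    unfolding hcomp_assoc[symmetric] es' by (rule hcomp_id_left[OF e])
  moreover have "hcomp X \<sigma> (hcomp (P 0) e \<sigma>) = \<sigma>"
    unfolding es' by (rule hcomp_id_right[OF s])
  ultimately show ?case using s by auto
next
  case (Suc j)
  then obtain S where S: "is_hom src tgt (Qr X P j) (Qr X P (Suc j)) S"
    and DSD: "hcomp (Qr X P (Suc j)) (Dr e d j) (hcomp (Qr X P j) S (Dr e d j)) = Dr e d j"
    and SDS: "hcomp (Qr X P j) S (hcomp (Qr X P (Suc j)) (Dr e d j) S) = S" by blast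
  from homotopy_step[OF res_facts(1)[OF X R, where j="Suc j"] res_facts(2)[OF X R, where j=j] res_facts(2)[OF X R, where j="Suc j"]
      S res_facts(3)[OF X R, where j=j] res_facts(4)[OF X R, where j=j] DSD SDS]
  show ?case by blast
qed

lemma Ext_zero_projective:
  fixes X :: "('v, 'a, 'k::field) rep"
  assumes X: "projective src tgt X" and i: "0 < i"
  shows "Ext_zero src tgt i X Y"
  unfolding Ext_zero_def
proof (intro allI impI)
  fix P d e g
  assume R: "proj_resolution src tgt X P d e"
    and g: "is_hom src tgt (P i) Y g \<and> hcomp (P i) g (d i) = zero_hom"
  obtain i' where ii: "i = Suc i'" using i by (cases i) auto
  obtain S where S: "is_hom src tgt (Qr X P i) (Qr X P (Suc i)) S"
    and DSD: "hcomp (Qr X P (Suc i)) (Dr e d i) (hcomp (Qr X P i) S (Dr e d i)) = Dr e d i"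
    and SDS: "hcomp (Qr X P i) S (hcomp (Qr X P (Suc i)) (Dr e d i) S) = S"
    using homotopy_exists[OF X R] by blast
  obtain S' where S': "is_hom src tgt (Qr X P (Suc i)) (Qr X P (Suc (Suc i))) S'"
    and E: "hcomp (Qr X P (Suc (Suc i))) (Dr e d (Suc i)) S' = hsub (hid (Qr X P (Suc i))) (hcomp (Qr X P i) S (Dr e d i))"
    using homotopy_step[OF res_facts(1)[OF X R, where j="Suc i"] res_facts(2)[OF X R, where j=i] res_facts(2)[OF X R, where j="Suc i"]
      S res_facts(3)[OF X R, where j=i] res_facts(4)[OF X R, where j=i] DSD SDS] by blast
  have E': "hcomp (Qr X P i) S (Dr e d i) = hsub (hid (Qr X P (Suc i))) (hcomp (Qr X P (Suc (Suc i))) (Dr e d (Suc i)) S')"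
    using E unfolding hsub_def by (auto simp: fun_eq_iff algebra_simps)
  have gh: "is_hom src tgt (Qr X P (Suc i)) Y g" using g by simp
  define h where "h = hcomp (Qr X P (Suc i)) g S"
  have "is_hom src tgt (P (i - 1)) Y h" unfolding h_def using is_hom_comp[OF S gh] ii by simp
  moreover have "hcomp (P (i - 1)) h (d (i - 1)) = g"
  proof -
    have "hcomp (P (i - 1)) h (d (i - 1)) = hcomp (Qr X P i) h (Dr e d i)" using ii by simp
    also have "\<dots> = hcomp (Qr X P (Suc i)) g (hcomp (Qr X P i) S (Dr e d i))"
      unfolding h_def hcomp_assoc ..
    also have "\<dots> = hsub g (hcomp (Qr X P (Suc (Suc i))) (hcomp (Qr X P (Suc i)) g (Dr e d (Suc i))) S')"
      unfolding E' hcomp_sub_right hcomp_id_right[OF gh] hcomp_assoc ..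
    also have "\<dots> = g" using g by (simp add: hcomp_zero_left hsub_zero)
    finally show ?thesis .
  qed
  ultimately show "\<exists>h. is_hom src tgt (P (i - 1)) Y h \<and> hcomp (P (i - 1)) h (d (i - 1)) = g" by blast
qed


definition aen :: "nat \<Rightarrow> 'a::finite" where
  "aen = (SOME f. bij_betw f {..<(card (UNIV::'a set))} (UNIV::'a set))"

definition ain :: "'a::finite \<Rightarrow> nat" where
  "ain a = inv_into {..<(card (UNIV::'a set))} aen a"

lemma aen_bij: "bij_betw (aen :: nat \<Rightarrow> 'a::finite) {..<(card (UNIV::'a set))} UNIV"
proof -
  have "\<exists>f. bij_betw f {..<(card (UNIV::'a set))} (UNIV::'a set)"
    using ex_bij_betw_nat_finite[of "UNIV::'a set"] by (auto simp: atLeast0LessThan)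
  then show ?thesis unfolding aen_def by (rule someI_ex)
qed

lemma ain_lt: "ain (a::'a::finite) < (card (UNIV::'a set))"
  unfolding ain_def using aen_bij[where 'a='a]
  by (metis bij_betw_def inv_into_into iso_tuple_UNIV_I lessThan_iff)

lemma aen_ain[simp]: "aen (ain (a::'a::finite)) = a"
  unfolding ain_def using aen_bij[where 'a='a]
  by (simp add: bij_betw_def f_inv_into_f)

lemma ain_aen: "s < (card (UNIV::'a set)) \<Longrightarrow> ain (aen s :: 'a::finite) = s"
  unfolding ain_def using aen_bij[where 'a='a]
  by (simp add: bij_betw_def inv_into_f_f)

lemma ain_inj: "ain (a::'a::finite) = ain b \<Longrightarrow> a = b"
  by (metis aen_ain)

definition psum :: "(nat \<Rightarrow> nat) \<Rightarrow> nat \<Rightarrow> nat" where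
  "psum f t = (\<Sum>s<t. f s)"

lemma psum_Suc: "psum f (Suc t) = psum f t + f t"
  unfolding psum_def by simp

lemma psum_mono: "s \<le> t \<Longrightarrow> psum f s \<le> psum f t"
  unfolding psum_def by (rule sum_mono2) auto

lemma psum_bound: "s < n \<Longrightarrow> l < f s \<Longrightarrow> psum f s + l < psum f n"
  using psum_mono[of "Suc s" n f] by (simp add: psum_Suc)

lemma psum_decode: "p < psum f n \<Longrightarrow> \<exists>s<n. \<exists>l<f s. p = psum f s + l"
proof (induction n)
  case 0 then show ?case by (simp add: psum_def)
next
  case (Suc n)
  show ?case
  proof (cases "p < psum f n")
    case True then show ?thesis using Suc.IH by (meson less_Suc_eq)
  next
    case False
    then have "p - psum f n < f n" "p = psum f n + (p - psum f n)" using Suc.prems by (auto simp: psum_Suc)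
    then show ?thesis by blast
  qed
qed

lemma psum_unique:
  assumes "l < f s" "l' < f s'" "psum f s + l = psum f s' + l'"
  shows "s = s' \<and> l = l'"
proof -
  have "\<not> s < s'" if "l < f s" "l' < f s'" "psum f s + l = psum f s' + l'" for s s' l l'
  proof
    assume "s < s'"
    then have "psum f s + l < psum f (Suc s)" using that by (simp add: psum_Suc)
    also have "\<dots> \<le> psum f s'" using \<open>s < s'\<close> by (intro psum_mono) simp
    finally show False using that by simp
  qed
  then have "s = s'" using assms by (metis linorder_neqE_nat)
  then show ?thesis using assms by simp
qed

section \<open>Free representations\<close>

definition bsF :: "('a::finite \<Rightarrow> 'v) \<Rightarrow> ('a \<Rightarrow> 'v) \<Rightarrow> ('v \<Rightarrow> nat) \<Rightarrow> 'v \<Rightarrow> nat \<Rightarrow> nat" where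
  "bsF src tgt m y s = (if tgt (aen s) = y then m (src (aen s)) else 0)"

definition sig :: "('a::finite \<Rightarrow> 'v) \<Rightarrow> ('a \<Rightarrow> 'v) \<Rightarrow> ('v \<Rightarrow> nat) \<Rightarrow> 'v \<Rightarrow> nat" where
  "sig src tgt m y = psum (bsF src tgt m y) (card (UNIV::'a set))"

definition rpos :: "('a::finite \<Rightarrow> 'v) \<Rightarrow> ('a \<Rightarrow> 'v) \<Rightarrow> ('v \<Rightarrow> nat) \<Rightarrow> 'a \<Rightarrow> nat" where
  "rpos src tgt m a = psum (bsF src tgt m (tgt a)) (ain a)"

definition Fdim :: "('a::finite \<Rightarrow> 'v) \<Rightarrow> ('a \<Rightarrow> 'v) \<Rightarrow> ('v \<Rightarrow> nat) \<Rightarrow> 'v \<Rightarrow> nat" where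
  "Fdim src tgt m y = m y + sig src tgt m y"

definition Fact :: "('a::finite \<Rightarrow> 'v) \<Rightarrow> ('a \<Rightarrow> 'v) \<Rightarrow> ('v \<Rightarrow> nat) \<Rightarrow> 'a \<Rightarrow> ('k::field) mat" where
  "Fact src tgt m a = (\<lambda>i j. if j < m (src a) \<and> i = m (tgt a) + rpos src tgt m a + j then 1 else 0)"

definition Frep :: "('a::finite \<Rightarrow> 'v) \<Rightarrow> ('a \<Rightarrow> 'v) \<Rightarrow> ('v \<Rightarrow> nat) \<Rightarrow> ('v, 'a, 'k::field) rep" where
  "Frep src tgt m = (Fdim src tgt m, Fact src tgt m)"

lemma rdim_Frep[simp]: "rdim (Frep src tgt m) = Fdim src tgt m"
  unfolding Frep_def rdim_def by simp

lemma ract_Frep[simp]: "ract (Frep src tgt m) = Fact src tgt m"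
  unfolding Frep_def ract_def by simp

lemma bsF_ain: "bsF src tgt m (tgt a) (ain a) = m (src a)"
  unfolding bsF_def by simp

lemma rpos_bound: "j < m (src a) \<Longrightarrow> rpos src tgt m a + j < sig src tgt m (tgt a)"
  unfolding rpos_def sig_def by (rule psum_bound) (auto simp: ain_lt bsF_ain)

lemma rpos_decode:
  assumes "p < sig src tgt m y"
  shows "\<exists>a l. tgt a = y \<and> l < m (src a) \<and> p = rpos src tgt m a + l"
proof -
  obtain s l where s: "s < (card (UNIV::'a set))" and l: "l < bsF src tgt m y s" and p: "p = psum (bsF src tgt m y) s + l"
    using psum_decode[OF assms[unfolded sig_def]] by blast
  define a where "a = (aen s :: 'a)"
  have sa: "ain a = s" unfolding a_def using s by (rule ain_aen)
  have t: "tgt a = y" using l unfolding bsF_def a_def by (auto split: if_splits)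
  have "l < m (src a)" using l t unfolding bsF_def a_def by auto
  moreover have "p = rpos src tgt m a + l" unfolding rpos_def t sa p ..
  ultimately show ?thesis using t by blast
qed

lemma rpos_inj:
  assumes "tgt a = tgt a'" "l < m (src a)" "l' < m (src a')" "rpos src tgt m a + l = rpos src tgt m a' + l'"
  shows "a = a' \<and> l = l'"
proof -
  have "ain a = ain a' \<and> l = l'"
    using psum_unique[of l "bsF src tgt m (tgt a)" "ain a" l' "ain a'"] assms
    unfolding rpos_def by (metis bsF_ain)
  then show ?thesis using ain_inj by blast
qed

lemma is_rep_Frep: "is_rep src tgt (Frep src tgt m :: ('v, 'a::finite, 'k::field) rep)"
  unfolding is_rep_def
proof (intro conjI allI impI)
  fix a :: 'a
  show "mat_on (rdim (Frep src tgt m) (tgt a)) (rdim (Frep src tgt m) (src a)) (ract (Frep src tgt m :: ('v, 'a, 'k) rep) a)"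
    unfolding mat_on_def rdim_Frep ract_Frep Fact_def Fdim_def
    by (auto dest: rpos_bound[of _ m src a tgt] simp: not_less[symmetric])
next
  fix a b :: 'a assume ab: "tgt a = src b"
  show "mmul (rdim (Frep src tgt m) (tgt a)) (ract (Frep src tgt m :: ('v, 'a, 'k) rep) b) (ract (Frep src tgt m :: ('v, 'a, 'k) rep) a) = (\<lambda>_ _. 0)"
    unfolding mmul_def ract_Frep Fact_def using ab by (auto intro!: ext sum.neutral)
qed

definition rdec :: "('a::finite \<Rightarrow> 'v) \<Rightarrow> ('a \<Rightarrow> 'v) \<Rightarrow> ('v \<Rightarrow> nat) \<Rightarrow> 'v \<Rightarrow> nat \<Rightarrow> 'a \<times> nat" where
  "rdec src tgt m y p = (SOME al. tgt (fst al) = y \<and> snd al < m (src (fst al)) \<and> p = rpos src tgt m (fst al) + snd al)"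

lemma rdec_rpos:
  assumes "tgt a = y" "l < m (src a)"
  shows "rdec src tgt m y (rpos src tgt m a + l) = (a, l)"
proof -
  have ex: "\<exists>al. tgt (fst al) = y \<and> snd al < m (src (fst al)) \<and> rpos src tgt m a + l = rpos src tgt m (fst al) + snd al"
    using assms by (intro exI[of _ "(a, l)"]) auto
  define al where "al = rdec src tgt m y (rpos src tgt m a + l)"
  have "tgt (fst al) = y \<and> snd al < m (src (fst al)) \<and> rpos src tgt m a + l = rpos src tgt m (fst al) + snd al"
    unfolding al_def rdec_def by (rule someI_ex[OF ex])
  then have "a = fst al \<and> l = snd al" using assms rpos_inj[where a=a and a'="fst al" and l=l and l'="snd al" and m=m and src=src and tgt=tgt] by auto
  then show ?thesis unfolding al_def[symmetric] by (cases al) auto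
qed

definition fext :: "('a::finite \<Rightarrow> 'v) \<Rightarrow> ('a \<Rightarrow> 'v) \<Rightarrow> ('v, 'a, 'k::field) rep \<Rightarrow> ('v \<Rightarrow> nat) \<Rightarrow> ('v, 'k) hom \<Rightarrow> ('v, 'k) hom" where
  "fext src tgt N m \<phi> = (\<lambda>y i j. if j < m y then \<phi> y i j else if j < Fdim src tgt m y then
      (case rdec src tgt m y (j - m y) of (a, l) \<Rightarrow> \<Sum>r<rdim N (src a). ract N a i r * \<phi> (src a) r l) else 0)"

lemma fext_top: "j < m y \<Longrightarrow> fext src tgt N m \<phi> y i j = \<phi> y i j"
  unfolding fext_def by simp

lemma fext_rad:
  assumes "tgt a = y" "l < m (src a)"
  shows "fext src tgt N m \<phi> y i (m y + rpos src tgt m a + l) = (\<Sum>r<rdim N (src a). ract N a i r * \<phi> (src a) r l)"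
proof -
  have "rpos src tgt m a + l < sig src tgt m y" using rpos_bound[of l m src a tgt] assms by simp
  then show ?thesis unfolding fext_def Fdim_def using rdec_rpos[where src=src and tgt=tgt and m=m, OF assms] by (simp add: add.assoc)
qed

lemma fext_out: "Fdim src tgt m y \<le> j \<Longrightarrow> fext src tgt N m \<phi> y i j = 0"
  unfolding fext_def Fdim_def by auto

lemma col_cases:
  assumes "j < Fdim src tgt m y" "\<not> j < m y"
  shows "\<exists>a l. tgt a = y \<and> l < m (src a) \<and> j = m y + rpos src tgt m a + l"
proof -
  have "j - m y < sig src tgt m y" using assms unfolding Fdim_def by simp
  from rpos_decode[OF this] obtain a l where "tgt a = y" "l < m (src a)" "j - m y = rpos src tgt m a + l" by blast
  then show ?thesis using assms by (intro exI[of _ a] exI[of _ l]) auto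
qed

lemma mmul_Fact:
  "mmul (Fdim src tgt m (tgt a)) A (Fact src tgt m a) i j =
     (if j < m (src a) then A i (m (tgt a) + rpos src tgt m a + j) else 0)"
proof (cases "j < m (src a)")
  case True
  have "m (tgt a) + rpos src tgt m a + j < Fdim src tgt m (tgt a)"
    using rpos_bound[where src=src and tgt=tgt and m=m and a=a, OF True] unfolding Fdim_def by simp
  then show ?thesis unfolding mmul_def Fact_def using True
    by (simp add: if_distrib[of "\<lambda>x. _ * x"] sum.delta' cong: if_cong)
qed (simp add: mmul_def Fact_def)


lemma is_hom_fext:
  fixes N :: "('v, 'a::finite, 'k::field) rep"
  assumes N: "is_rep src tgt N" and phi: "\<And>y. mat_on (rdim N y) (m y) (\<phi> y)"
  shows "is_hom src tgt (Frep src tgt m) N (fext src tgt N m \<phi>)"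
  unfolding is_hom_def
proof (intro conjI allI)
  show "is_rep src tgt (Frep src tgt m :: ('v, 'a, 'k) rep)" by (rule is_rep_Frep)
  show "is_rep src tgt N" by fact
  fix y show "mat_on (rdim N y) (rdim (Frep src tgt m) y) (fext src tgt N m \<phi> y)"
    unfolding mat_on_def rdim_Frep
  proof (intro allI impI)
    fix i j assume "rdim N y \<le> i \<or> Fdim src tgt m y \<le> j"
    then show "fext src tgt N m \<phi> y i j = 0"
    proof
      assume i: "rdim N y \<le> i"
      show ?thesis
      proof (cases "j < m y")
        case True then show ?thesis using phi[of y] i by (simp add: fext_top mat_on_def)
      next
        case False
        show ?thesis
        proof (cases "j < Fdim src tgt m y")
          case True
          then obtain a l where a: "tgt a = y" "l < m (src a)" "j = m y + rpos src tgt m a + l"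
            using col_cases[OF True False] by blast
          have "fext src tgt N m \<phi> y i j = (\<Sum>r<rdim N (src a). ract N a i r * \<phi> (src a) r l)"
            unfolding a(3) by (rule fext_rad[where src=src and tgt=tgt and m=m, OF a(1) a(2)])
          also have "\<dots> = 0" using a(1) i mat_onD[OF is_repD(1)[OF N, of a]] by simp
          finally show ?thesis .
        qed (simp add: fext_out)
      qed
    qed (simp add: fext_out)
  qed
next
  fix a
  show "mmul (rdim (Frep src tgt m) (tgt a)) (fext src tgt N m \<phi> (tgt a)) (ract (Frep src tgt m) a) =
        mmul (rdim N (src a)) (ract N a) (fext src tgt N m \<phi> (src a))"
  proof (intro ext)
    fix i j
    have L: "mmul (rdim (Frep src tgt m) (tgt a)) (fext src tgt N m \<phi> (tgt a)) (ract (Frep src tgt m) a) i j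
      = (if j < m (src a) then fext src tgt N m \<phi> (tgt a) i (m (tgt a) + rpos src tgt m a + j) else 0)"
      unfolding rdim_Frep ract_Frep by (rule mmul_Fact)
    show "mmul (rdim (Frep src tgt m) (tgt a)) (fext src tgt N m \<phi> (tgt a)) (ract (Frep src tgt m) a) i j =
        mmul (rdim N (src a)) (ract N a) (fext src tgt N m \<phi> (src a)) i j"
    proof (cases "j < m (src a)")
      case True
      have "mmul (rdim (Frep src tgt m) (tgt a)) (fext src tgt N m \<phi> (tgt a)) (ract (Frep src tgt m) a) i j
        = (\<Sum>r<rdim N (src a). ract N a i r * \<phi> (src a) r j)"
        unfolding L using True fext_rad[where src=src and tgt=tgt and m=m and a=a and y="tgt a", OF refl True] by simp
      also have "\<dots> = mmul (rdim N (src a)) (ract N a) (fext src tgt N m \<phi> (src a)) i j"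
        unfolding mmul_def fext_top[where m=m, OF True] ..
      finally show ?thesis .
    next
      case False
      have "mmul (rdim N (src a)) (ract N a) (fext src tgt N m \<phi> (src a)) i j = 0"
      proof (cases "j < Fdim src tgt m (src a)")
        case True
        then obtain a' l where a': "tgt a' = src a" "l < m (src a')" "j = m (src a) + rpos src tgt m a' + l"
          using col_cases[OF True False] by blast
        have fr: "fext src tgt N m \<phi> (src a) r j = mmul (rdim N (src a')) (ract N a') (\<phi> (src a')) r l" for r
          unfolding a'(3) mmul_def by (rule fext_rad[where src=src and tgt=tgt and m=m, OF a'(1) a'(2)])
        have "mmul (rdim N (src a)) (ract N a) (fext src tgt N m \<phi> (src a)) i j
            = mmul (rdim N (src a)) (ract N a) (mmul (rdim N (src a')) (ract N a') (\<phi> (src a'))) i l"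
          unfolding mmul_def fr ..
        also have "\<dots> = mmul (rdim N (src a')) (mmul (rdim N (tgt a')) (ract N a) (ract N a')) (\<phi> (src a')) i l"
          unfolding mmul_assoc a'(1) ..
        also have "\<dots> = 0" unfolding is_repD(2)[OF N a'(1)] by (simp add: mmul_def)
        finally show ?thesis .
      next
        case False
        then show ?thesis unfolding mmul_def by (simp add: fext_out)
      qed
      then show ?thesis unfolding L using False by simp
    qed
  qed
qed

definition ftop :: "('v \<Rightarrow> nat) \<Rightarrow> ('v, 'k::field) hom \<Rightarrow> ('v, 'k) hom" where
  "ftop m f = (\<lambda>y i j. if j < m y then f y i j else 0)"

lemma hom_is_fext:
  fixes N :: "('v, 'a::finite, 'k::field) rep"
  assumes f: "is_hom src tgt (Frep src tgt m) N f"
  shows "f = fext src tgt N m (ftop m f)"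
proof (intro ext)
  fix y i j
  show "f y i j = fext src tgt N m (ftop m f) y i j"
  proof (cases "j < m y")
    case True then show ?thesis by (simp add: fext_top ftop_def)
  next
    case False
    show ?thesis
    proof (cases "j < Fdim src tgt m y")
      case True
      then obtain a l where a: "tgt a = y" "l < m (src a)" "j = m y + rpos src tgt m a + l"
        using col_cases[OF True False] by blast
      have "f y i j = mmul (rdim (Frep src tgt m :: ('v, 'a, 'k) rep) (tgt a)) (f (tgt a)) (ract (Frep src tgt m :: ('v, 'a, 'k) rep) a) i l"
        unfolding rdim_Frep ract_Frep mmul_Fact using a by simp
      also have "\<dots> = mmul (rdim N (src a)) (ract N a) (f (src a)) i l"
        using is_homD(4)[OF f] by simp
      also have "\<dots> = fext src tgt N m (ftop m f) y i j"
        unfolding a(3) fext_rad[where src=src and tgt=tgt and m=m, OF a(1) a(2)] mmul_def ftop_def using a(2) by simp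
      finally show ?thesis .
    next
      case False
      then show ?thesis using is_homD(3)[OF f, of y] by (simp add: fext_out mat_on_def)
    qed
  qed
qed

lemma mat_on_ftop: "is_hom src tgt (Frep src tgt m) N f \<Longrightarrow> mat_on (rdim N y) (m y) (ftop m f y)"
  using is_homD(3)[of src tgt "Frep src tgt m" N f y] unfolding mat_on_def ftop_def by auto

lemma fext_eqI:
  fixes N :: "('v, 'a::finite, 'k::field) rep"
  assumes f: "is_hom src tgt (Frep src tgt m) N f" and g: "is_hom src tgt (Frep src tgt m) N g"
    and top: "\<And>y i j. j < m y \<Longrightarrow> f y i j = g y i j"
  shows "f = g"
proof -
  have "ftop m f = ftop m g" using top unfolding ftop_def by (auto intro!: ext)
  then show ?thesis using hom_is_fext[OF f] hom_is_fext[OF g] by simp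
qed

lemma projective_Frep: "projective src tgt (Frep src tgt m :: ('v, 'a::finite, 'k::field) rep)"
  unfolding projective_def
proof (intro conjI allI impI)
  show "is_rep src tgt (Frep src tgt m :: ('v, 'a, 'k) rep)" by (rule is_rep_Frep)
  fix X Y :: "('v, 'a, 'k) rep" and g h
  assume A: "is_hom src tgt X Y g \<and> hom_surj X Y g \<and> is_hom src tgt (Frep src tgt m) Y h"
  then have g: "is_hom src tgt X Y g" and gs: "hom_surj X Y g" and h: "is_hom src tgt (Frep src tgt m) Y h" by auto
  define pre where "pre = (\<lambda>y j. SOME x. x \<in> vspace (rdim X y) \<and> mvec (rdim X y) (g y) x = (\<lambda>i. h y i j))"
  have pre: "pre y j \<in> vspace (rdim X y) \<and> mvec (rdim X y) (g y) (pre y j) = (\<lambda>i. h y i j)" for y j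
  proof -
    have "(\<lambda>i. h y i j) \<in> vspace (rdim Y y)" using is_homD(3)[OF h, of y] unfolding vspace_def mat_on_def by auto
    then have "\<exists>x. x \<in> vspace (rdim X y) \<and> mvec (rdim X y) (g y) x = (\<lambda>i. h y i j)"
      using gs unfolding hom_surj_def by blast
    then show ?thesis unfolding pre_def by (rule someI_ex)
  qed
  define \<phi> where "\<phi> = (\<lambda>y i j. if j < m y then pre y j i else 0)"
  have phi: "mat_on (rdim X y) (m y) (\<phi> y)" for y
    using pre unfolding \<phi>_def mat_on_def vspace_def by auto
  have X: "is_rep src tgt X" using g by (rule is_homD)
  have h': "is_hom src tgt (Frep src tgt m) X (fext src tgt X m \<phi>)" using is_hom_fext[OF X phi] .
  have "hcomp X g (fext src tgt X m \<phi>) = h"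
  proof (rule fext_eqI[OF is_hom_comp[OF h' g] h])
    fix y i j assume j: "j < m y"
    have "hcomp X g (fext src tgt X m \<phi>) y i j = mvec (rdim X y) (g y) (pre y j) i"
      unfolding hcomp_def mmul_def mvec_def using j by (simp add: fext_top \<phi>_def)
    then show "hcomp X g (fext src tgt X m \<phi>) y i j = h y i j" using pre by simp
  qed
  then show "\<exists>h'. is_hom src tgt (Frep src tgt m) X h' \<and> hcomp X g h' = h" using h' by blast
qed


definition dext :: "('v, 'k::field) hom \<Rightarrow> ('v \<Rightarrow> nat) \<Rightarrow> ('v, 'k) hom" where
  "dext \<iota> k = (\<lambda>y i j. if j < k y then \<iota> y i j else 0)"

lemma dext_eq_fext:
  fixes N :: "('v, 'a::finite, 'k::field) rep"
  assumes z: "\<And>a i l. l < k (src a) \<Longrightarrow> mmul (rdim N (src a)) (ract N a) (\<iota> (src a)) i l = 0"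
  shows "dext \<iota> k = fext src tgt N k \<iota>"
proof (intro ext)
  fix y i j
  show "dext \<iota> k y i j = fext src tgt N k \<iota> y i j"
  proof (cases "j < k y")
    case True then show ?thesis by (simp add: dext_def fext_top)
  next
    case False
    show ?thesis
    proof (cases "j < Fdim src tgt k y")
      case True
      then obtain a l where a: "tgt a = y" "l < k (src a)" "j = k y + rpos src tgt k a + l"
        using col_cases[OF True False] by blast
      have "fext src tgt N k \<iota> y i j = mmul (rdim N (src a)) (ract N a) (\<iota> (src a)) i l"
        unfolding a(3) mmul_def by (rule fext_rad[where src=src and tgt=tgt and m=k, OF a(1) a(2)])
      then show ?thesis using z[OF a(2)] False by (simp add: dext_def)
    next
      case False
      then show ?thesis using \<open>\<not> j < k y\<close> by (simp add: dext_def fext_out)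
    qed
  qed
qed

lemma is_hom_dext:
  fixes N :: "('v, 'a::finite, 'k::field) rep"
  assumes N: "is_rep src tgt N" and io: "\<And>y. mat_on (rdim N y) (k y) (\<iota> y)"
    and z: "\<And>a i l. l < k (src a) \<Longrightarrow> mmul (rdim N (src a)) (ract N a) (\<iota> (src a)) i l = 0"
  shows "is_hom src tgt (Frep src tgt k) N (dext \<iota> k)"
proof -
  have "dext \<iota> k = fext src tgt N k \<iota>" by (rule dext_eq_fext) (rule z)
  then show ?thesis using is_hom_fext[OF N io] by simp
qed

definition ish :: "('a::finite \<Rightarrow> 'v) \<Rightarrow> ('a \<Rightarrow> 'v) \<Rightarrow> ('v \<Rightarrow> nat) \<Rightarrow> ('v, 'k::field) hom" where
  "ish src tgt m = (\<lambda>y i j. if j < sig src tgt m y \<and> i = m y + j then 1 else 0)"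

definition dmap :: "('a::finite \<Rightarrow> 'v) \<Rightarrow> ('a \<Rightarrow> 'v) \<Rightarrow> ('v \<Rightarrow> nat) \<Rightarrow> ('v, 'k::field) hom" where
  "dmap src tgt m = dext (ish src tgt m) (sig src tgt m)"

lemma is_hom_dmap: "is_hom src tgt (Frep src tgt (sig src tgt m)) (Frep src tgt m :: ('v, 'a::finite, 'k::field) rep) (dmap src tgt m)"
  unfolding dmap_def
proof (rule is_hom_dext[OF is_rep_Frep])
  fix y show "mat_on (rdim (Frep src tgt m :: ('v, 'a, 'k) rep) y) (sig src tgt m y) (ish src tgt m y)"
    unfolding mat_on_def ish_def by (auto simp: Fdim_def)
next
  fix a :: 'a and i l
  show "mmul (rdim (Frep src tgt m :: ('v, 'a, 'k) rep) (src a)) (ract (Frep src tgt m :: ('v, 'a, 'k) rep) a) (ish src tgt m (src a)) i l = 0"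
    unfolding mmul_def ract_Frep Fact_def ish_def by (auto intro!: sum.neutral)
qed

lemma sum_if_lt: "(k::nat) \<le> n \<Longrightarrow> (\<Sum>j<n. if j < k then f j else 0) = (\<Sum>j<k. f j)"
proof -
  assume "k \<le> n"
  then obtain d where n: "n = k + d" by (metis le_add_diff_inverse)
  show ?thesis unfolding n sum_split_add by simp
qed

lemma mvec_dext:
  assumes "k y \<le> n"
  shows "mvec n (dext \<iota> k y) x = mvec (k y) (\<iota> y) x"
  unfolding mvec_def dext_def
  using sum_if_lt[OF assms, of "\<lambda>j. \<iota> y _ j * x j"] by (simp add: if_distrib[of "\<lambda>z. z * _"] cong: if_cong)

lemma mvec_restrict: "mvec c A x = mvec c A (\<lambda>j. if j < c then x j else 0)"
  unfolding mvec_def by (auto intro!: ext sum.cong)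

lemma kern_dext:
  assumes inj: "\<And>w. w \<in> vspace (k y) \<Longrightarrow> mvec (k y) (\<iota> y) w = (\<lambda>_. 0) \<Longrightarrow> w = (\<lambda>_. 0)"
  shows "(mvec (Fdim src tgt k y) (dext \<iota> k y) x = (\<lambda>_. 0)) \<longleftrightarrow> (\<forall>i<k y. x i = 0)"
proof -
  have eq: "mvec (Fdim src tgt k y) (dext \<iota> k y) x = mvec (k y) (\<iota> y) (\<lambda>j. if j < k y then x j else 0)"
  proof -
    have "mvec (Fdim src tgt k y) (dext \<iota> k y) x = mvec (k y) (\<iota> y) x" by (rule mvec_dext) (simp add: Fdim_def)
    also have "\<dots> = mvec (k y) (\<iota> y) (\<lambda>j. if j < k y then x j else 0)" by (rule mvec_restrict)
    finally show ?thesis .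
  qed
  have v: "(\<lambda>j. if j < k y then x j else 0) \<in> vspace (k y)" unfolding vspace_def by auto
  show ?thesis
  proof
    assume "mvec (Fdim src tgt k y) (dext \<iota> k y) x = (\<lambda>_. 0)"
    then have "(\<lambda>j. if j < k y then x j else 0) = (\<lambda>_. 0)" using inj[OF v] eq by simp
    then show "\<forall>i<k y. x i = 0" by (metis (mono_tags, lifting))
  next
    assume "\<forall>i<k y. x i = 0"
    then have "(\<lambda>j. if j < k y then x j else 0) = (\<lambda>_. 0)" by auto
    then show "mvec (Fdim src tgt k y) (dext \<iota> k y) x = (\<lambda>_. 0)" unfolding eq by (simp add: mvec_zero_vec)
  qed
qed

lemma mvec_ish: "mvec (sig src tgt m y) (ish src tgt m y) z =
   (\<lambda>i. if m y \<le> i \<and> i < m y + sig src tgt m y then z (i - m y) else 0)"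
proof (intro ext)
  fix i
  show "mvec (sig src tgt m y) (ish src tgt m y) z i = (if m y \<le> i \<and> i < m y + sig src tgt m y then z (i - m y) else 0)"
  proof (cases "m y \<le> i \<and> i < m y + sig src tgt m y")
    case True
    then have e: "\<And>j. (j < sig src tgt m y \<and> i = m y + j) = (j = i - m y)" by auto
    have "mvec (sig src tgt m y) (ish src tgt m y) z i = (\<Sum>j<sig src tgt m y. if j = i - m y then z j else 0)"
      unfolding mvec_def ish_def e by (simp add: if_distrib[of "\<lambda>x. x * _"] cong: if_cong)
    moreover have "i - m y < sig src tgt m y" using True by linarith
    ultimately show ?thesis using True by (simp add: sum.delta)
  next
    case False
    then show ?thesis unfolding mvec_def ish_def by (auto intro!: sum.neutral)
  qed
qed

lemma image_dmap:
  assumes x: "x \<in> vspace (Fdim src tgt m y)"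
  shows "(\<exists>z\<in>vspace (Fdim src tgt (sig src tgt m) y). mvec (Fdim src tgt (sig src tgt m) y) (dmap src tgt m y) z = x)
     \<longleftrightarrow> (\<forall>i<m y. x i = 0)"
proof
  assume "\<exists>z\<in>vspace (Fdim src tgt (sig src tgt m) y). mvec (Fdim src tgt (sig src tgt m) y) (dmap src tgt m y) z = x"
  then obtain z where "mvec (Fdim src tgt (sig src tgt m) y) (dmap src tgt m y) z = x" by blast
  then have "x = mvec (sig src tgt m y) (ish src tgt m y) z"
    unfolding dmap_def by (simp add: mvec_dext Fdim_def)
  then show "\<forall>i<m y. x i = 0" by (simp add: mvec_ish)
next
  assume x0: "\<forall>i<m y. x i = 0"
  define z where "z = (\<lambda>j. if j < sig src tgt m y then x (m y + j) else 0)"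
  have "z \<in> vspace (Fdim src tgt (sig src tgt m) y)" unfolding z_def vspace_def Fdim_def by auto
  moreover have "mvec (Fdim src tgt (sig src tgt m) y) (dmap src tgt m y) z = x"
  proof -
    have "mvec (Fdim src tgt (sig src tgt m) y) (dmap src tgt m y) z = mvec (sig src tgt m y) (ish src tgt m y) z"
      unfolding dmap_def by (simp add: mvec_dext Fdim_def)
    also have "\<dots> = x"
      unfolding mvec_ish using x x0 unfolding vspace_def Fdim_def z_def
      by (auto intro!: ext simp: not_le)
    finally show ?thesis .
  qed
  ultimately show "\<exists>z\<in>vspace (Fdim src tgt (sig src tgt m) y). mvec (Fdim src tgt (sig src tgt m) y) (dmap src tgt m y) z = x"
    by blast
qed

lemma ish_inj: "w \<in> vspace (sig src tgt m y) \<Longrightarrow> mvec (sig src tgt m y) (ish src tgt m y) w = (\<lambda>_. 0) \<Longrightarrow> w = (\<lambda>_. 0)"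
proof (intro ext)
  fix j assume w: "w \<in> vspace (sig src tgt m y)" and z: "mvec (sig src tgt m y) (ish src tgt m y) w = (\<lambda>_. 0)"
  show "w j = 0"
  proof (cases "j < sig src tgt m y")
    case True
    have "mvec (sig src tgt m y) (ish src tgt m y) w (m y + j) = w j" unfolding mvec_ish using True by simp
    then show ?thesis using z by (metis)
  next
    case False then show ?thesis using w unfolding vspace_def by simp
  qed
qed

definition sigi :: "('a::finite \<Rightarrow> 'v) \<Rightarrow> ('a \<Rightarrow> 'v) \<Rightarrow> ('v \<Rightarrow> nat) \<Rightarrow> nat \<Rightarrow> 'v \<Rightarrow> nat" where
  "sigi src tgt k j = ((sig src tgt) ^^ j) k"

lemma sigi_simps[simp]: "sigi src tgt k 0 = k" "sigi src tgt k (Suc j) = sig src tgt (sigi src tgt k j)"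
  unfolding sigi_def by simp_all

definition resP :: "('a::finite \<Rightarrow> 'v) \<Rightarrow> ('a \<Rightarrow> 'v) \<Rightarrow> ('v \<Rightarrow> nat) \<Rightarrow> ('v \<Rightarrow> nat) \<Rightarrow> nat \<Rightarrow> ('v, 'a, 'k::field) rep" where
  "resP src tgt \<mu> k j = (case j of 0 \<Rightarrow> Frep src tgt \<mu> | Suc j' \<Rightarrow> Frep src tgt (sigi src tgt k j'))"

definition resd :: "('a::finite \<Rightarrow> 'v) \<Rightarrow> ('a \<Rightarrow> 'v) \<Rightarrow> ('v, 'k::field) hom \<Rightarrow> ('v \<Rightarrow> nat) \<Rightarrow> nat \<Rightarrow> ('v, 'k) hom" where
  "resd src tgt \<iota> k j = (case j of 0 \<Rightarrow> dext \<iota> k | Suc j' \<Rightarrow> dmap src tgt (sigi src tgt k j'))"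

lemma resP_simps[simp]: "resP src tgt \<mu> k 0 = Frep src tgt \<mu>" "resP src tgt \<mu> k (Suc j) = Frep src tgt (sigi src tgt k j)"
  unfolding resP_def by simp_all

lemma resd_simps[simp]: "resd src tgt \<iota> k 0 = dext \<iota> k" "resd src tgt \<iota> k (Suc j) = dmap src tgt (sigi src tgt k j)"
  unfolding resd_def by simp_all

lemma resolution:
  fixes X :: "('v, 'a::finite, 'k::field) rep"
  assumes e: "is_hom src tgt (Frep src tgt \<mu>) X e" and es: "hom_surj (Frep src tgt \<mu>) X e"
    and io: "\<And>y. mat_on (Fdim src tgt \<mu> y) (k y) (\<iota> y)"
    and rad: "\<And>y i j. i < \<mu> y \<Longrightarrow> \<iota> y i j = 0"
    and inj: "\<And>y w. w \<in> vspace (k y) \<Longrightarrow> mvec (k y) (\<iota> y) w = (\<lambda>_. 0) \<Longrightarrow> w = (\<lambda>_. 0)"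
    and span: "\<And>y x. x \<in> vspace (Fdim src tgt \<mu> y) \<Longrightarrow>
        (mvec (Fdim src tgt \<mu> y) (e y) x = (\<lambda>_. 0) \<longleftrightarrow> (\<exists>w\<in>vspace (k y). mvec (k y) (\<iota> y) w = x))"
  shows "proj_resolution src tgt X (resP src tgt \<mu> k) (resd src tgt \<iota> k) e"
proof -
  have d0: "is_hom src tgt (Frep src tgt k) (Frep src tgt \<mu> :: ('v, 'a, 'k) rep) (dext \<iota> k)"
  proof (rule is_hom_dext[OF is_rep_Frep])
    show "\<And>y. mat_on (rdim (Frep src tgt \<mu> :: ('v, 'a, 'k) rep) y) (k y) (\<iota> y)" using io by simp
    fix a :: 'a and i l
    show "mmul (rdim (Frep src tgt \<mu> :: ('v, 'a, 'k) rep) (src a)) (ract (Frep src tgt \<mu> :: ('v, 'a, 'k) rep) a) (\<iota> (src a)) i l = 0"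
      unfolding mmul_def ract_Frep Fact_def using rad by (auto intro!: sum.neutral)
  qed
  have homs: "is_hom src tgt (resP src tgt \<mu> k (Suc j)) (resP src tgt \<mu> k j) (resd src tgt \<iota> k j)" for j
    using d0 is_hom_dmap by (cases j) auto
  have kerd: "x \<in> vspace (Fdim src tgt (sigi src tgt k j) y) \<Longrightarrow>
      (mvec (Fdim src tgt (sigi src tgt k j) y) (resd src tgt \<iota> k j y) x = (\<lambda>_. 0)) \<longleftrightarrow> (\<forall>i<sigi src tgt k j y. x i = 0)" for j x y
  proof (cases j)
    case 0 then show ?thesis using kern_dext[where \<iota>=\<iota> and k=k, OF inj] by simp
  next
    case (Suc j')
    then show ?thesis using kern_dext[where \<iota>="ish src tgt (sigi src tgt k j')" and k="sig src tgt (sigi src tgt k j')", OF ish_inj]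
      by (simp add: dmap_def)
  qed
  show ?thesis unfolding proj_resolution_def
  proof (intro conjI allI)
    show "projective src tgt (resP src tgt \<mu> k j)" for j by (cases j) (auto intro: projective_Frep)
    show "is_hom src tgt (resP src tgt \<mu> k (Suc j)) (resP src tgt \<mu> k j) (resd src tgt \<iota> k j)" for j by (rule homs)
    show "is_hom src tgt (resP src tgt \<mu> k 0) X e" using e by simp
    show "hom_surj (resP src tgt \<mu> k 0) X e" using es by simp
    show "exact_at (resP src tgt \<mu> k 1) (resP src tgt \<mu> k 0) (resd src tgt \<iota> k 0) e"
      unfolding exact_at_def
    proof (intro allI ballI)
      fix y and x :: "'k vec" assume x: "x \<in> vspace (rdim (resP src tgt \<mu> k 0) y)"
      have "(\<exists>w\<in>vspace (k y). mvec (k y) (\<iota> y) w = x) \<longleftrightarrow>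
          (\<exists>z\<in>vspace (Fdim src tgt k y). mvec (Fdim src tgt k y) (dext \<iota> k y) z = x)"
      proof
        assume "\<exists>w\<in>vspace (k y). mvec (k y) (\<iota> y) w = x"
        then obtain w where w: "w \<in> vspace (k y)" "mvec (k y) (\<iota> y) w = x" by blast
        have "w \<in> vspace (Fdim src tgt k y)" using w(1) unfolding vspace_def Fdim_def by auto
        moreover have "mvec (Fdim src tgt k y) (dext \<iota> k y) w = x" using w(2) by (simp add: mvec_dext Fdim_def)
        ultimately show "\<exists>z\<in>vspace (Fdim src tgt k y). mvec (Fdim src tgt k y) (dext \<iota> k y) z = x" by blast
      next
        assume "\<exists>z\<in>vspace (Fdim src tgt k y). mvec (Fdim src tgt k y) (dext \<iota> k y) z = x"
        then obtain z where z: "mvec (Fdim src tgt k y) (dext \<iota> k y) z = x" by blast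
        have "(\<lambda>j. if j < k y then z j else 0) \<in> vspace (k y)" unfolding vspace_def by auto
        moreover have "mvec (k y) (\<iota> y) (\<lambda>j. if j < k y then z j else 0) = x"
        proof -
          have "mvec (k y) (\<iota> y) (\<lambda>j. if j < k y then z j else 0) = mvec (k y) (\<iota> y) z" by (rule mvec_restrict[symmetric])
          also have "\<dots> = mvec (Fdim src tgt k y) (dext \<iota> k y) z" by (rule mvec_dext[symmetric]) (simp add: Fdim_def)
          finally show ?thesis using z by simp
        qed
        ultimately show "\<exists>w\<in>vspace (k y). mvec (k y) (\<iota> y) w = x" by blast
      qed
      then show "(mvec (rdim (resP src tgt \<mu> k 0) y) (e y) x = (\<lambda>_. 0)) =
          (\<exists>ya\<in>vspace (rdim (resP src tgt \<mu> k 1) y). mvec (rdim (resP src tgt \<mu> k 1) y) (resd src tgt \<iota> k 0 y) ya = x)"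
        using span[of x y] x by simp
    qed
    fix j
    show "exact_at (resP src tgt \<mu> k (Suc (Suc j))) (resP src tgt \<mu> k (Suc j)) (resd src tgt \<iota> k (Suc j)) (resd src tgt \<iota> k j)"
      unfolding exact_at_def
    proof (intro allI ballI)
      fix y and x :: "'k vec" assume x: "x \<in> vspace (rdim (resP src tgt \<mu> k (Suc j)) y)"
      then have x': "x \<in> vspace (Fdim src tgt (sigi src tgt k j) y)" by simp
      show "(mvec (rdim (resP src tgt \<mu> k (Suc j)) y) (resd src tgt \<iota> k j y) x = (\<lambda>_. 0)) =
          (\<exists>ya\<in>vspace (rdim (resP src tgt \<mu> k (Suc (Suc j))) y).
              mvec (rdim (resP src tgt \<mu> k (Suc (Suc j))) y) (resd src tgt \<iota> k (Suc j) y) ya = x)"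
        using kerd[OF x'] image_dmap[OF x'] by simp
    qed
  qed
qed


lemma sum_pick: "p < (l::nat) \<Longrightarrow> (\<Sum>i<l. f i) = f p + (\<Sum>i<l. if i = p then 0 else f i)"
proof -
  assume p: "p < l"
  have "(\<Sum>i<l. f i) = (\<Sum>i<l. (if i = p then f i else 0) + (if i = p then 0 else f i))"
    by (rule sum.cong) auto
  also have "\<dots> = f p + (\<Sum>i<l. if i = p then 0 else f i)"
    using p by (simp add: sum.distrib sum.delta)
  finally show ?thesis .
qed

lemma func_ext:
  fixes D :: "('k::field) mat" and \<phi> :: "'k vec"
  assumes "mat_on l m D" "\<forall>j. m \<le> j \<longrightarrow> \<phi> j = 0"
    "\<forall>x\<in>vspace m. mvec m D x = (\<lambda>_. 0) \<longrightarrow> (\<Sum>j<m. \<phi> j * x j) = 0"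
  shows "\<exists>\<psi>. \<psi> \<in> vspace l \<and> (\<forall>j. (\<Sum>i<l. \<psi> i * D i j) = \<phi> j)"
  using assms
proof (induction m arbitrary: D \<phi>)
  case 0
  then have "\<phi> j = 0" for j by auto
  moreover have "D i j = 0" for i j using 0 unfolding mat_on_def by auto
  ultimately show ?case by (intro exI[of _ "\<lambda>_. 0"]) (auto simp: vspace_def)
next
  case (Suc m)
  have moD: "\<And>i j. l \<le> i \<or> Suc m \<le> j \<Longrightarrow> D i j = 0" using Suc.prems(1) unfolding mat_on_def by auto
  show ?case
  proof (cases "\<forall>i. D i m = 0")
    case True
    define D' where "D' = (\<lambda>i j. if j < m then D i j else 0)"
    define \<phi>' where "\<phi>' = (\<lambda>j. if j < m then \<phi> j else 0)"
    have em: "(\<lambda>j. if j = m then 1 else 0) \<in> vspace (Suc m)" unfolding vspace_def by auto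
    have "mvec (Suc m) D (\<lambda>j. if j = m then 1 else 0) = (\<lambda>_. 0)"
      unfolding mvec_def using True by (auto intro!: ext simp: if_distrib[of "\<lambda>x. _ * x"] cong: if_cong)
    then have "(\<Sum>j<Suc m. \<phi> j * (if j = m then 1 else 0)) = 0" using Suc.prems(3) em by blast
    then have phim: "\<phi> m = 0" by (simp add: if_distrib[of "\<lambda>x. _ * x"] cong: if_cong)
    have "\<exists>\<psi>. \<psi> \<in> vspace l \<and> (\<forall>j. (\<Sum>i<l. \<psi> i * D' i j) = \<phi>' j)"
    proof (rule Suc.IH)
      show "mat_on l m D'" unfolding mat_on_def D'_def using moD by auto
      show "\<forall>j. m \<le> j \<longrightarrow> \<phi>' j = 0" unfolding \<phi>'_def by auto
      show "\<forall>x\<in>vspace m. mvec m D' x = (\<lambda>_. 0) \<longrightarrow> (\<Sum>j<m. \<phi>' j * x j) = 0"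
      proof (intro ballI impI)
        fix x :: "'k vec" assume x: "x \<in> vspace m" and z: "mvec m D' x = (\<lambda>_. 0)"
        have xs: "x \<in> vspace (Suc m)" and xm: "x m = 0" using x unfolding vspace_def by auto
        have "mvec (Suc m) D x = mvec m D' x" unfolding mvec_def D'_def using xm by (auto intro!: ext)
        then have "(\<Sum>j<Suc m. \<phi> j * x j) = 0" using Suc.prems(3) xs z by auto
        then show "(\<Sum>j<m. \<phi>' j * x j) = 0" using xm unfolding \<phi>'_def by simp
      qed
    qed
    then obtain \<psi> where psi: "\<psi> \<in> vspace l" "\<And>j. (\<Sum>i<l. \<psi> i * D' i j) = \<phi>' j" by blast
    have "(\<Sum>i<l. \<psi> i * D i j) = \<phi> j" for j
    proof -
      consider "j < m" | "j = m" | "m < j" by linarith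
      then show ?thesis
      proof cases
        case 1 then show ?thesis using psi(2)[of j] unfolding D'_def \<phi>'_def by simp
      next
        case 2 then show ?thesis using True phim by simp
      next
        case 3 then show ?thesis using moD Suc.prems(2) by simp
      qed
    qed
    then show ?thesis using psi(1) by blast
  next
    case False
    then obtain p where Dp: "D p m \<noteq> 0" by blast
    have pl: "p < l" using moD Dp by (meson not_le)
    define c where "c = (\<lambda>i. D i m / D p m)"
    define D' where "D' = (\<lambda>i j. if i = p \<or> m \<le> j then 0 else D i j - c i * D p j)"
    define \<phi>' where "\<phi>' = (\<lambda>j. if j < m then \<phi> j - (\<phi> m / D p m) * D p j else 0)"
    have "\<exists>\<psi>. \<psi> \<in> vspace l \<and> (\<forall>j. (\<Sum>i<l. \<psi> i * D' i j) = \<phi>' j)"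
    proof (rule Suc.IH)
      show "mat_on l m D'" unfolding mat_on_def D'_def c_def using moD by auto
      show "\<forall>j. m \<le> j \<longrightarrow> \<phi>' j = 0" unfolding \<phi>'_def by auto
      show "\<forall>x\<in>vspace m. mvec m D' x = (\<lambda>_. 0) \<longrightarrow> (\<Sum>j<m. \<phi>' j * x j) = 0"
      proof (intro ballI impI)
        fix x :: "'k vec" assume x: "x \<in> vspace m" and z: "mvec m D' x = (\<lambda>_. 0)"
        define t where "t = (\<Sum>j<m. D p j * x j)"
        define x' where "x' = x(m := - t / D p m)"
        have xs: "x' \<in> vspace (Suc m)" using x unfolding vspace_def x'_def by auto
        have sx: "(\<Sum>j<m. f j * x' j) = (\<Sum>j<m. f j * x j)" for f
          unfolding x'_def by (rule sum.cong) auto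
        have "mvec (Suc m) D x' = (\<lambda>_. 0)"
        proof (intro ext)
          fix i
          have e: "mvec (Suc m) D x' i = (\<Sum>j<m. D i j * x j) - c i * t"
            unfolding mvec_def using Dp by (simp add: sx x'_def c_def)
          show "mvec (Suc m) D x' i = 0"
          proof (cases "i = p")
            case True then show ?thesis unfolding e c_def t_def using Dp by simp
          next
            case False
            have "(\<Sum>j<m. D i j * x j) - c i * t = mvec m D' x i"
              unfolding mvec_def D'_def t_def using False
              by (simp add: sum_distrib_left sum_subtractf[symmetric] algebra_simps)
            then show ?thesis using e z by (metis)
          qed
        qed
        then have "(\<Sum>j<Suc m. \<phi> j * x' j) = 0" using Suc.prems(3) xs by blast
        then have "(\<Sum>j<m. \<phi> j * x j) + \<phi> m * (- t / D p m) = 0" by (simp add: sx x'_def)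
        moreover have "(\<Sum>j<m. \<phi>' j * x j) = (\<Sum>j<m. \<phi> j * x j) - (\<phi> m / D p m) * t"
          unfolding \<phi>'_def t_def by (simp add: sum_distrib_left sum_subtractf[symmetric] algebra_simps)
        ultimately show "(\<Sum>j<m. \<phi>' j * x j) = 0" by (simp add: algebra_simps)
      qed
    qed
    then obtain \<psi>' where psi': "\<psi>' \<in> vspace l" "\<And>j. (\<Sum>i<l. \<psi>' i * D' i j) = \<phi>' j" by blast
    define s where "s = (\<Sum>i<l. if i = p then 0 else \<psi>' i * D i m)"
    define \<psi> where "\<psi> = (\<lambda>i. if i = p then (\<phi> m - s) / D p m else \<psi>' i)"
    have psiv: "\<psi> \<in> vspace l" using psi'(1) pl unfolding \<psi>_def vspace_def by auto
    have split: "(\<Sum>i<l. \<psi> i * D i j) = (\<phi> m - s) / D p m * D p j + (\<Sum>i<l. if i = p then 0 else \<psi>' i * D i j)" for j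
      using sum_pick[OF pl, of "\<lambda>i. \<psi> i * D i j"] unfolding \<psi>_def by (simp cong: if_cong)
    have "(\<Sum>i<l. \<psi> i * D i j) = \<phi> j" for j
    proof -
      consider "j < m" | "j = m" | "m < j" by linarith
      then show ?thesis
      proof cases
        case 1
        have "\<phi>' j = (\<Sum>i<l. \<psi>' i * D' i j)" using psi'(2) by simp
        also have "\<dots> = (\<Sum>i<l. (if i = p then 0 else \<psi>' i * D i j) - D p j / D p m * (if i = p then 0 else \<psi>' i * D i m))"
          using 1 by (intro sum.cong) (auto simp: D'_def c_def field_simps)
        also have "\<dots> = (\<Sum>i<l. if i = p then 0 else \<psi>' i * D i j) - D p j * (s / D p m)"
          unfolding sum_subtractf sum_distrib_left[symmetric] s_def by simp
        finally have "(\<Sum>i<l. if i = p then 0 else \<psi>' i * D i j) = \<phi>' j + D p j * (s / D p m)" by simp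
        then show ?thesis unfolding split using 1 Dp unfolding \<phi>'_def by (simp add: field_simps)
      next
        case 2
        show ?thesis using Dp unfolding split 2 by (simp add: s_def)
      next
        case 3 then show ?thesis using moD Suc.prems(2) by simp
      qed
    qed
    then show ?thesis using psiv by blast
  qed
qed


section \<open>The injective module at a vertex\<close>

definition bI :: "('a::finite \<Rightarrow> 'v) \<Rightarrow> ('a \<Rightarrow> 'v) \<Rightarrow> 'v \<Rightarrow> 'v \<Rightarrow> nat \<Rightarrow> nat" where
  "bI src tgt v x s = (if src (aen s) = x \<and> tgt (aen s) = v then 1 else 0)"

definition cnt :: "('a::finite \<Rightarrow> 'v) \<Rightarrow> ('a \<Rightarrow> 'v) \<Rightarrow> 'v \<Rightarrow> 'v \<Rightarrow> nat" where
  "cnt src tgt v x = psum (bI src tgt v x) (card (UNIV::'a set))"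

definition Idim :: "('a::finite \<Rightarrow> 'v) \<Rightarrow> ('a \<Rightarrow> 'v) \<Rightarrow> 'v \<Rightarrow> 'v \<Rightarrow> nat" where
  "Idim src tgt v x = (if x = v then 1 else 0) + cnt src tgt v x"

definition ipos :: "('a::finite \<Rightarrow> 'v) \<Rightarrow> ('a \<Rightarrow> 'v) \<Rightarrow> 'v \<Rightarrow> 'a \<Rightarrow> nat" where
  "ipos src tgt v b = (if src b = v then 1 else 0) + psum (bI src tgt v (src b)) (ain b)"

definition Iact :: "('a::finite \<Rightarrow> 'v) \<Rightarrow> ('a \<Rightarrow> 'v) \<Rightarrow> 'v \<Rightarrow> 'a \<Rightarrow> ('k::field) mat" where
  "Iact src tgt v a = (\<lambda>i j. if tgt a = v \<and> i = 0 \<and> j = ipos src tgt v a then 1 else 0)"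

definition Irep :: "('a::finite \<Rightarrow> 'v) \<Rightarrow> ('a \<Rightarrow> 'v) \<Rightarrow> 'v \<Rightarrow> ('v, 'a, 'k::field) rep" where
  "Irep src tgt v = (Idim src tgt v, Iact src tgt v)"

lemma rdim_Irep[simp]: "rdim (Irep src tgt v) = Idim src tgt v"
  unfolding Irep_def rdim_def by simp

lemma ract_Irep[simp]: "ract (Irep src tgt v) = Iact src tgt v"
  unfolding Irep_def ract_def by simp

lemma bI_ain: "tgt b = v \<Longrightarrow> bI src tgt v (src b) (ain b) = 1"
  unfolding bI_def by simp

lemma ipos_bound: "tgt b = v \<Longrightarrow> ipos src tgt v b < Idim src tgt v (src b)"
  unfolding ipos_def Idim_def cnt_def
  using psum_bound[OF ain_lt[of b], of 0 "bI src tgt v (src b)"] bI_ain[where tgt=tgt and b=b and v=v and src=src]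
  by auto

lemma ipos_nz: "src b = v \<Longrightarrow> ipos src tgt v b \<noteq> 0"
  unfolding ipos_def by simp

lemma idec:
  assumes "i < Idim src tgt v x" "\<not> (x = v \<and> i = 0)"
  shows "\<exists>b. src b = x \<and> tgt b = v \<and> i = ipos src tgt v b"
proof -
  define i' where "i' = i - (if x = v then 1 else 0)"
  have "i' < psum (bI src tgt v x) (card (UNIV::'a set))"
    using assms unfolding i'_def Idim_def cnt_def by (auto split: if_splits)
  from psum_decode[OF this] obtain s l where s: "s < card (UNIV::'a set)" "l < bI src tgt v x s"
    "i' = psum (bI src tgt v x) s + l" by blast
  define b where "b = (aen s :: 'a)"
  have sb: "ain b = s" unfolding b_def using s(1) by (rule ain_aen)
  have b: "src b = x" "tgt b = v" and l: "l = 0" using s(2) unfolding bI_def b_def by (auto split: if_splits)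
  have "i = ipos src tgt v b" unfolding ipos_def b(1) sb using s(3) l assms unfolding i'_def by (auto split: if_splits)
  then show ?thesis using b by blast
qed

lemma ipos_inj:
  assumes "src b = src b'" "tgt b = v" "tgt b' = v" "ipos src tgt v b = ipos src tgt v b'"
  shows "b = b'"
proof -
  have "psum (bI src tgt v (src b)) (ain b) + 0 = psum (bI src tgt v (src b)) (ain b') + 0"
    using assms unfolding ipos_def by simp
  then have "ain b = ain b'"
    using psum_unique[of 0 "bI src tgt v (src b)" "ain b" 0 "ain b'"] bI_ain[where tgt=tgt and b=b and v=v and src=src]
      bI_ain[where tgt=tgt and b=b' and v=v and src=src] assms
    by auto
  then show ?thesis by (rule ain_inj)
qed

definition iarr :: "('a::finite \<Rightarrow> 'v) \<Rightarrow> ('a \<Rightarrow> 'v) \<Rightarrow> 'v \<Rightarrow> 'v \<Rightarrow> nat \<Rightarrow> 'a" where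
  "iarr src tgt v x i = (SOME b. src b = x \<and> tgt b = v \<and> i = ipos src tgt v b)"

lemma iarr_ipos:
  assumes "src b = x" "tgt b = v"
  shows "iarr src tgt v x (ipos src tgt v b) = b"
proof -
  have "\<exists>b'. src b' = x \<and> tgt b' = v \<and> ipos src tgt v b = ipos src tgt v b'" using assms by blast
  then have "src (iarr src tgt v x (ipos src tgt v b)) = x \<and> tgt (iarr src tgt v x (ipos src tgt v b)) = v \<and>
      ipos src tgt v b = ipos src tgt v (iarr src tgt v x (ipos src tgt v b))"
    unfolding iarr_def by (rule someI_ex)
  then show ?thesis using ipos_inj[where b=b and b'="iarr src tgt v x (ipos src tgt v b)" and tgt=tgt and v=v and src=src] assms by auto
qed

lemma is_rep_Irep: "is_rep src tgt (Irep src tgt v :: ('v, 'a::finite, 'k::field) rep)"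
  unfolding is_rep_def
proof (intro conjI allI impI)
  fix a :: 'a
  show "mat_on (rdim (Irep src tgt v) (tgt a)) (rdim (Irep src tgt v) (src a)) (ract (Irep src tgt v :: ('v, 'a, 'k) rep) a)"
    unfolding mat_on_def rdim_Irep ract_Irep Iact_def using ipos_bound[where b=a and v=v and src=src and tgt=tgt]
    by (auto simp: Idim_def)
next
  fix a b :: 'a assume ab: "tgt a = src b"
  show "mmul (rdim (Irep src tgt v) (tgt a)) (ract (Irep src tgt v :: ('v, 'a, 'k) rep) b) (ract (Irep src tgt v :: ('v, 'a, 'k) rep) a) = (\<lambda>_ _. 0)"
    unfolding mmul_def ract_Irep Iact_def using ab ipos_nz[where b=b and v=v and src=src and tgt=tgt] by (auto intro!: ext sum.neutral)
qed

definition ihom :: "('a::finite \<Rightarrow> 'v) \<Rightarrow> ('a \<Rightarrow> 'v) \<Rightarrow> ('v, 'a, 'k::field) rep \<Rightarrow> 'v \<Rightarrow> 'k vec \<Rightarrow> ('v, 'k) hom" where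
  "ihom src tgt M v \<phi> = (\<lambda>x i j. if x = v \<and> i = 0 then \<phi> j else if i < Idim src tgt v x then
      (\<Sum>r<rdim M v. \<phi> r * ract M (iarr src tgt v x i) r j) else 0)"

lemma ihom_arr:
  assumes "src b = x" "tgt b = v"
  shows "ihom src tgt M v \<phi> x (ipos src tgt v b) j = (\<Sum>r<rdim M v. \<phi> r * ract M b r j)"
  using assms ipos_nz[where b=b and v=v and src=src and tgt=tgt] ipos_bound[where b=b and v=v and src=src and tgt=tgt]
    iarr_ipos[where src=src and tgt=tgt, OF assms]
  unfolding ihom_def by auto

lemma ihom_top: "ihom src tgt M v \<phi> v 0 j = \<phi> j"
  unfolding ihom_def by simp


lemma Idim_v_pos: "0 < Idim src tgt v v"
  unfolding Idim_def by simp

lemma mmul_Iact: "mmul (Idim src tgt v (src c)) (Iact src tgt v c) B i j =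
   (if tgt c = v \<and> i = 0 then B (ipos src tgt v c) j else 0)"
proof (cases "tgt c = v \<and> i = 0")
  case True
  then have "ipos src tgt v c < Idim src tgt v (src c)" using ipos_bound[where b=c and v=v and src=src and tgt=tgt] by simp
  then show ?thesis unfolding mmul_def Iact_def using True
    by (simp add: if_distrib[of "\<lambda>x. x * _"] sum.delta' cong: if_cong)
next
  case False then show ?thesis unfolding mmul_def Iact_def by auto
qed

lemma is_hom_ihom:
  fixes M :: "('v, 'a::finite, 'k::field) rep"
  assumes M: "is_rep src tgt M" and phi: "\<phi> \<in> vspace (rdim M v)"
  shows "is_hom src tgt M (Irep src tgt v) (ihom src tgt M v \<phi>)"
  unfolding is_hom_def
proof (intro conjI allI)
  show "is_rep src tgt M" by fact
  show "is_rep src tgt (Irep src tgt v :: ('v, 'a, 'k) rep)" by (rule is_rep_Irep)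
  fix x
  show "mat_on (rdim (Irep src tgt v :: ('v, 'a, 'k) rep) x) (rdim M x) (ihom src tgt M v \<phi> x)"
    unfolding mat_on_def rdim_Irep
  proof (intro allI impI)
    fix i j assume ij: "Idim src tgt v x \<le> i \<or> rdim M x \<le> j"
    show "ihom src tgt M v \<phi> x i j = 0"
    proof (cases "x = v \<and> i = 0")
      case True
      have pos: "0 < Idim src tgt v v" by (simp add: Idim_def)
      have "rdim M v \<le> j" using ij True pos by auto
      then show ?thesis using True phi unfolding vspace_def by (simp add: ihom_top)
    next
      case False
      note nf = this
      show ?thesis
      proof (cases "i < Idim src tgt v x")
        case True
        then obtain b where b: "src b = x" "tgt b = v" "i = ipos src tgt v b" using idec[OF True False] by blast
        have "rdim M x \<le> j" using ij True by simp
        then show ?thesis unfolding b(3) ihom_arr[where src=src and tgt=tgt, OF b(1) b(2)]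
          using mat_onD[OF is_repD(1)[OF M, of b]] b(1) by simp
      next
        case False then show ?thesis using nf unfolding ihom_def by auto
      qed
    qed
  qed
next
  fix c
  show "mmul (rdim M (tgt c)) (ihom src tgt M v \<phi> (tgt c)) (ract M c) =
        mmul (rdim (Irep src tgt v) (src c)) (ract (Irep src tgt v) c) (ihom src tgt M v \<phi> (src c))"
  proof (intro ext)
    fix i j
    have R: "mmul (rdim (Irep src tgt v) (src c)) (ract (Irep src tgt v) c) (ihom src tgt M v \<phi> (src c)) i j
       = (if tgt c = v \<and> i = 0 then (\<Sum>r<rdim M v. \<phi> r * ract M c r j) else 0)"
    proof (cases "tgt c = v \<and> i = 0")
      case True
      then have "ihom src tgt M v \<phi> (src c) (ipos src tgt v c) j = (\<Sum>r<rdim M v. \<phi> r * ract M c r j)"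
        using ihom_arr[where src=src and tgt=tgt and b=c and x="src c" and v=v and M=M and \<phi>=\<phi>] by blast
      then show ?thesis unfolding rdim_Irep ract_Irep mmul_Iact using True by simp
    next
      case False
      show ?thesis unfolding rdim_Irep ract_Irep mmul_Iact using False by (simp only: if_False)
    qed
    show "mmul (rdim M (tgt c)) (ihom src tgt M v \<phi> (tgt c)) (ract M c) i j =
        mmul (rdim (Irep src tgt v) (src c)) (ract (Irep src tgt v) c) (ihom src tgt M v \<phi> (src c)) i j"
    proof (cases "tgt c = v \<and> i = 0")
      case True
      then show ?thesis unfolding R unfolding mmul_def using True by (auto simp: ihom_top)
    next
      case False
      have "mmul (rdim M (tgt c)) (ihom src tgt M v \<phi> (tgt c)) (ract M c) i j = 0"
      proof (cases "i < Idim src tgt v (tgt c)")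
        case True
        then obtain b where b: "src b = tgt c" "tgt b = v" "i = ipos src tgt v b" using idec[OF True False] by blast
        define Phi where "Phi = (\<lambda>(_::nat) r. \<phi> r)"
        have "mmul (rdim M (tgt c)) (ihom src tgt M v \<phi> (tgt c)) (ract M c) i j
           = mmul (rdim M (tgt c)) (mmul (rdim M v) Phi (ract M b)) (ract M c) 0 j"
          unfolding mmul_def b(3) ihom_arr[where src=src and tgt=tgt, OF b(1) b(2)] Phi_def by simp
        also have "\<dots> = mmul (rdim M v) Phi (mmul (rdim M (tgt c)) (ract M b) (ract M c)) 0 j"
          by (simp add: mmul_assoc)
        also have "\<dots> = 0" using is_repD(2)[OF M, of c b] b(1) by (simp add: mmul_def)
        finally show ?thesis .
      next
        case False then show ?thesis unfolding mmul_def ihom_def using Idim_v_pos[where src=src and tgt=tgt and v=v]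
          by (auto intro!: sum.neutral)
      qed
      then show ?thesis unfolding R using False by auto
    qed
  qed
qed

lemma hom_is_ihom:
  fixes M :: "('v, 'a::finite, 'k::field) rep"
  assumes f: "is_hom src tgt M (Irep src tgt v) f"
  shows "f = ihom src tgt M v (\<lambda>j. f v 0 j)"
proof (intro ext)
  fix x i j
  show "f x i j = ihom src tgt M v (\<lambda>j. f v 0 j) x i j"
  proof (cases "x = v \<and> i = 0")
    case True then show ?thesis by (auto simp: ihom_top)
  next
    case False
    show ?thesis
    proof (cases "i < Idim src tgt v x")
      case True
      then obtain b where b: "src b = x" "tgt b = v" "i = ipos src tgt v b" using idec[OF True False] by blast
      have "f x i j = mmul (rdim (Irep src tgt v :: ('v, 'a, 'k) rep) (src b)) (ract (Irep src tgt v :: ('v, 'a, 'k) rep) b) (f (src b)) 0 j"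
        unfolding rdim_Irep ract_Irep mmul_Iact using b by simp
      also have "\<dots> = mmul (rdim M (tgt b)) (f (tgt b)) (ract M b) 0 j" using is_homD(4)[OF f, of b] by simp
      also have "\<dots> = ihom src tgt M v (\<lambda>j. f v 0 j) x i j"
        unfolding b(3) ihom_arr[where src=src and tgt=tgt, OF b(1) b(2)] mmul_def b(2) by simp
      finally show ?thesis .
    next
      case False
      then show ?thesis using mat_onD[OF is_homD(3)[OF f, of x], of i j] Idim_v_pos[where src=src and tgt=tgt and v=v]
        unfolding ihom_def by auto
    qed
  qed
qed

lemma ihom_comp:
  fixes M :: "('v, 'a::finite, 'k::field) rep"
  assumes f: "is_hom src tgt L M f" and phi: "\<phi> \<in> vspace (rdim M v)"
  shows "hcomp M (ihom src tgt M v \<phi>) f = ihom src tgt L v (\<lambda>j. \<Sum>k<rdim M v. \<phi> k * f v k j)"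
proof -
  have M: "is_rep src tgt M" using f by (rule is_homD)
  have h: "is_hom src tgt L (Irep src tgt v) (hcomp M (ihom src tgt M v \<phi>) f)"
    by (rule is_hom_comp[OF f is_hom_ihom[OF M phi]])
  have "hcomp M (ihom src tgt M v \<phi>) f = ihom src tgt L v (\<lambda>j. hcomp M (ihom src tgt M v \<phi>) f v 0 j)"
    by (rule hom_is_ihom[OF h])
  also have "(\<lambda>j. hcomp M (ihom src tgt M v \<phi>) f v 0 j) = (\<lambda>j. \<Sum>k<rdim M v. \<phi> k * f v k j)"
    unfolding hcomp_def mmul_def by (simp add: ihom_top)
  finally show ?thesis .
qed

lemma Ext_zero_Irep:
  fixes Y :: "('v, 'a::finite, 'k::field) rep"
  assumes i: "0 < i"
  shows "Ext_zero src tgt i Y (Irep src tgt v)"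
  unfolding Ext_zero_def
proof (intro allI impI)
  fix P d e g
  assume R: "proj_resolution src tgt Y P d e"
    and g: "is_hom src tgt (P i) (Irep src tgt v) g \<and> hcomp (P i) g (d i) = zero_hom"
  obtain i' where ii: "i = Suc i'" using i by (cases i) auto
  have gh: "is_hom src tgt (P i) (Irep src tgt v) g" using g by simp
  have gd: "hcomp (P i) g (d i) = zero_hom" using g by simp
  have ex: "exact_at (P (Suc i)) (P i) (d i) (d i')" using R ii unfolding proj_resolution_def by auto
  have di': "is_hom src tgt (P i) (P i') (d i')" using R ii unfolding proj_resolution_def by auto
  have di: "is_hom src tgt (P (Suc i)) (P i) (d i)" using R unfolding proj_resolution_def by auto
  define \<phi> where "\<phi> = (\<lambda>j. g v 0 j)"
  have gphi: "g = ihom src tgt (P i) v \<phi>" unfolding \<phi>_def by (rule hom_is_ihom[OF gh])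
  have phiv: "\<phi> \<in> vspace (rdim (P i) v)"
    using mat_onD[OF is_homD(3)[OF gh, of v]] unfolding \<phi>_def vspace_def by auto
  have phid: "(\<Sum>k<rdim (P i) v. \<phi> k * d i v k c) = 0" for c
    using fun_cong[OF fun_cong[OF fun_cong[OF gd, of v], of 0], of c] unfolding hcomp_def mmul_def zero_hom_def \<phi>_def by simp
  have "\<exists>\<psi>. \<psi> \<in> vspace (rdim (P i') v) \<and> (\<forall>j. (\<Sum>r<rdim (P i') v. \<psi> r * d i' v r j) = \<phi> j)"
  proof (rule func_ext)
    show "mat_on (rdim (P i') v) (rdim (P i) v) (d i' v)" using di' by (rule is_homD)
    show "\<forall>j. rdim (P i) v \<le> j \<longrightarrow> \<phi> j = 0" using phiv unfolding vspace_def by auto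
    show "\<forall>x\<in>vspace (rdim (P i) v). mvec (rdim (P i) v) (d i' v) x = (\<lambda>_. 0) \<longrightarrow> (\<Sum>j<rdim (P i) v. \<phi> j * x j) = 0"
    proof (intro ballI impI)
      fix x :: "'k vec" assume x: "x \<in> vspace (rdim (P i) v)" and z: "mvec (rdim (P i) v) (d i' v) x = (\<lambda>_. 0)"
      then obtain y where y: "mvec (rdim (P (Suc i)) v) (d i v) y = x" using ex unfolding exact_at_def by blast
      have "(\<Sum>j<rdim (P i) v. \<phi> j * x j) = (\<Sum>j<rdim (P i) v. \<phi> j * (\<Sum>c<rdim (P (Suc i)) v. d i v j c * y c))"
        unfolding y[symmetric] mvec_def ..
      also have "\<dots> = (\<Sum>c<rdim (P (Suc i)) v. (\<Sum>j<rdim (P i) v. \<phi> j * d i v j c) * y c)"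
        by (simp add: sum_distrib_left sum_distrib_right mult.assoc sum.swap[of _ "{..<rdim (P i) v}"])
      also have "\<dots> = 0" using phid by simp
      finally show "(\<Sum>j<rdim (P i) v. \<phi> j * x j) = 0" .
    qed
  qed
  then obtain \<psi> where psi: "\<psi> \<in> vspace (rdim (P i') v)" "\<And>j. (\<Sum>r<rdim (P i') v. \<psi> r * d i' v r j) = \<phi> j" by blast
  have Pr: "is_rep src tgt (P i')" using di' by (rule is_homD)
  define h where "h = ihom src tgt (P i') v \<psi>"
  have "is_hom src tgt (P (i - 1)) (Irep src tgt v) h" unfolding h_def using ii is_hom_ihom[OF Pr psi(1)] by simp
  moreover have "hcomp (P (i - 1)) h (d (i - 1)) = g"
    unfolding h_def using ii ihom_comp[OF di' psi(1)] psi(2) gphi by simp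
  ultimately show "\<exists>h. is_hom src tgt (P (i - 1)) (Irep src tgt v) h \<and> hcomp (P (i - 1)) h (d (i - 1)) = g" by blast
qed


lemma mvec_unit: "p < n \<Longrightarrow> mvec n A (\<lambda>j. if j = p then 1 else 0) = (\<lambda>i. A i p)"
  unfolding mvec_def by (auto intro!: ext simp: if_distrib[of "\<lambda>x. _ * x"] cong: if_cong)

lemma subspace_basis:
  fixes W :: "('k::field) vec set"
  assumes "W \<subseteq> vspace N" "(\<lambda>_. 0) \<in> W" "\<forall>x\<in>W. \<forall>y\<in>W. (\<lambda>i. x i + y i) \<in> W" "\<forall>c. \<forall>x\<in>W. (\<lambda>i. c * x i) \<in> W"
  shows "\<exists>r B. mat_on N r B \<and> (\<forall>w\<in>vspace r. mvec r B w = (\<lambda>_. 0) \<longrightarrow> w = (\<lambda>_. 0)) \<and>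
           (\<forall>x. x \<in> W \<longleftrightarrow> (\<exists>w\<in>vspace r. mvec r B w = x))"
  using assms
proof (induction N arbitrary: W)
  case 0
  have W: "W = {\<lambda>_. 0}" using 0 unfolding vspace_def by auto
  show ?case
    by (intro exI[of _ 0] exI[of _ "\<lambda>_ _. 0"]) (auto simp: W mat_on_def vspace_def mvec_def)
next
  case (Suc N)
  define W0 where "W0 = {x\<in>W. x N = 0}"
  have "\<exists>r B. mat_on N r B \<and> (\<forall>w\<in>vspace r. mvec r B w = (\<lambda>_. 0) \<longrightarrow> w = (\<lambda>_. 0)) \<and>
           (\<forall>x. x \<in> W0 \<longleftrightarrow> (\<exists>w\<in>vspace r. mvec r B w = x))"
  proof (rule Suc.IH)
    show "W0 \<subseteq> vspace N"
    proof
      fix x assume "x \<in> W0"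
      then have x1: "\<forall>i. Suc N \<le> i \<longrightarrow> x i = 0" and x2: "x N = 0"
        using Suc.prems(1) unfolding W0_def vspace_def by auto
      have "x i = 0" if "N \<le> i" for i
      proof (cases "i = N")
        case True then show ?thesis using x2 by simp
      next
        case False then show ?thesis using x1 that by simp
      qed
      then show "x \<in> vspace N" unfolding vspace_def by auto
    qed
    show "(\<lambda>_. 0) \<in> W0" using Suc.prems(2) unfolding W0_def by auto
    show "\<forall>x\<in>W0. \<forall>y\<in>W0. (\<lambda>i. x i + y i) \<in> W0" using Suc.prems(3) unfolding W0_def by auto
    show "\<forall>c. \<forall>x\<in>W0. (\<lambda>i. c * x i) \<in> W0" using Suc.prems(4) unfolding W0_def by auto
  qed
  then obtain r0 B0 where B0: "mat_on N r0 B0" and inj0: "\<forall>w\<in>vspace r0. mvec r0 B0 w = (\<lambda>_. 0) \<longrightarrow> w = (\<lambda>_. 0)"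
    and sp0: "\<forall>x. x \<in> W0 \<longleftrightarrow> (\<exists>w\<in>vspace r0. mvec r0 B0 w = x)" by blast
  have B0': "mat_on (Suc N) r0 B0" using B0 unfolding mat_on_def by auto
  show ?case
  proof (cases "\<exists>w\<in>W. w N \<noteq> 0")
    case False
    then have "W0 = W" unfolding W0_def by auto
    then have "\<forall>x. x \<in> W \<longleftrightarrow> (\<exists>w\<in>vspace r0. mvec r0 B0 w = x)" using sp0 by simp
    then show ?thesis using B0' inj0 by blast
  next
    case True
    then obtain w where w: "w \<in> W" "w N \<noteq> 0" by blast
    have wv: "w \<in> vspace (Suc N)" using w Suc.prems(1) by auto
    define B where "B = (\<lambda>i j. if j < r0 then B0 i j else if j = r0 then w i else 0)"
    have mvB: "mvec (Suc r0) B z = (\<lambda>i. mvec r0 B0 z i + z r0 * w i)" for z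
    proof (intro ext)
      fix i
      have "(\<Sum>j<r0. B i j * z j) = (\<Sum>j<r0. B0 i j * z j)" unfolding B_def by (rule sum.cong) auto
      then show "mvec (Suc r0) B z i = mvec r0 B0 z i + z r0 * w i"
        unfolding mvec_def by (simp add: B_def mult.commute)
    qed
    have rz: "mvec r0 B0 z = mvec r0 B0 (\<lambda>j. if j < r0 then z j else 0)" for z by (rule mvec_restrict)
    have rv: "(\<lambda>j. if j < r0 then z j else 0) \<in> vspace r0" for z :: "'k vec" unfolding vspace_def by auto
    have WB0: "mvec r0 B0 z \<in> W" for z
    proof -
      have "mvec r0 B0 z \<in> W0" using sp0[rule_format, of "mvec r0 B0 z"] rz[of z] rv[of z] by auto
      then show ?thesis unfolding W0_def by auto
    qed
    have B0N: "mvec r0 B0 z N = 0" for z using B0 unfolding mvec_def mat_on_def by auto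
    have "mat_on (Suc N) (Suc r0) B" using B0' wv unfolding B_def mat_on_def vspace_def by auto
    moreover have "\<forall>z\<in>vspace (Suc r0). mvec (Suc r0) B z = (\<lambda>_. 0) \<longrightarrow> z = (\<lambda>_. 0)"
    proof (intro ballI impI)
      fix z :: "'k vec" assume z: "z \<in> vspace (Suc r0)" and e: "mvec (Suc r0) B z = (\<lambda>_. 0)"
      have "z r0 * w N = 0" using fun_cong[OF e[unfolded mvB], of N] B0N[of z] by simp
      then have zr: "z r0 = 0" using w(2) by simp
      then have "mvec r0 B0 z = (\<lambda>_. 0)" using e unfolding mvB by (auto simp: fun_eq_iff)
      then have "mvec r0 B0 (\<lambda>j. if j < r0 then z j else 0) = (\<lambda>_. 0)" using rz[of z] by simp
      then have "(\<lambda>j. if j < r0 then z j else 0) = (\<lambda>_. 0)" using inj0[rule_format, OF rv[of z]] by simp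
      show "z = (\<lambda>_. 0)"
      proof (intro ext)
        fix j
        consider "j < r0" | "j = r0" | "Suc r0 \<le> j" by linarith
        then show "z j = 0"
        proof cases
          case 1 then show ?thesis using fun_cong[OF \<open>(\<lambda>j. if j < r0 then z j else 0) = (\<lambda>_. 0)\<close>, of j] by simp
        next
          case 2 then show ?thesis using zr by simp
        next
          case 3 then show ?thesis using z unfolding vspace_def by simp
        qed
      qed
    qed
    moreover have "\<forall>x. x \<in> W \<longleftrightarrow> (\<exists>z\<in>vspace (Suc r0). mvec (Suc r0) B z = x)"
    proof (intro allI iffI)
      fix x assume x: "x \<in> W"
      define c where "c = x N / w N"
      have cw: "(\<lambda>i. (- c) * w i) \<in> W" using Suc.prems(4)[rule_format, OF w(1), of "- c"] by simp
      have x'W: "(\<lambda>i. x i + (- c) * w i) \<in> W" using Suc.prems(3)[rule_format, OF x cw] by simp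
      have "(\<lambda>i. x i + (- c) * w i) \<in> W0" unfolding W0_def using x'W w(2) by (auto simp: c_def)
      then obtain z0 where z0: "z0 \<in> vspace r0" "mvec r0 B0 z0 = (\<lambda>i. x i + (- c) * w i)"
        using sp0[rule_format, of "\<lambda>i. x i + (- c) * w i"] by auto
      define z where "z = z0(r0 := c)"
      have "z \<in> vspace (Suc r0)" using z0(1) unfolding z_def vspace_def by auto
      moreover have "mvec r0 B0 z = mvec r0 B0 z0" unfolding z_def mvec_def by (intro ext sum.cong) auto
      then have "mvec (Suc r0) B z = x" unfolding mvB z0(2) by (auto simp: z_def fun_eq_iff)
      ultimately show "\<exists>z\<in>vspace (Suc r0). mvec (Suc r0) B z = x" by blast
    next
      fix x assume "\<exists>z\<in>vspace (Suc r0). mvec (Suc r0) B z = x"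
      then obtain z where "mvec (Suc r0) B z = x" by blast
      then have x: "x = (\<lambda>i. mvec r0 B0 z i + z r0 * w i)" unfolding mvB by simp
      have zw: "(\<lambda>i. z r0 * w i) \<in> W" using Suc.prems(4)[rule_format, OF w(1)] by simp
      show "x \<in> W" unfolding x using Suc.prems(3)[rule_format, OF WB0[of z] zw] by simp
    qed
    ultimately show ?thesis by (intro exI[of _ "Suc r0"] exI[of _ B]) auto
  qed
qed


definition dv :: "'v \<Rightarrow> 'v \<Rightarrow> nat" where
  "dv v = (\<lambda>x. if x = v then 1 else 0)"

lemma dext_dmap_zero:
  "hcomp (Frep src tgt k) (dext \<psi> k) (dmap src tgt k) = zero_hom"
  unfolding hcomp_def dmap_def dext_def ish_def mmul_def zero_hom_def
  by (auto intro!: ext sum.neutral simp: Fdim_def)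

lemma Fact_dv_col0:
  assumes "src a = v"
  shows "mmul (Fdim src tgt (dv v) (src a)) (Fact src tgt (dv v) a) B i 0 =
    (if i = dv v (tgt a) + rpos src tgt (dv v) a then B 0 0 else 0)"
proof -
  have pos: "Fdim src tgt (dv v) (src a) > 0" using assms unfolding Fdim_def dv_def by simp
  have "\<And>j. Fact src tgt (dv v) a i j * B j 0 =
     (if j = 0 then (if i = dv v (tgt a) + rpos src tgt (dv v) a then B 0 0 else 0) else 0)"
    using assms unfolding Fact_def dv_def by auto
  then show ?thesis unfolding mmul_def using pos by (simp add: sum.delta)
qed

lemma cocycle_GA:
  fixes \<iota> :: "('v, 'k::field) hom" and tgt :: "'a::finite \<Rightarrow> 'v"
  assumes a12: "a1 \<noteq> a2" "src a1 = v" "src a2 = v" and mv: "0 < m v"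
    and dh: "is_hom src tgt (Frep src tgt k) (Frep src tgt m :: ('v, 'a, 'k) rep) (dext \<iota> k)"
    and spanrad: "\<And>y x. x \<in> vspace (Fdim src tgt m y) \<Longrightarrow> (\<forall>i<m y. x i = 0) \<Longrightarrow>
                   \<exists>w\<in>vspace (k y). mvec (k y) (\<iota> y) w = x"
  shows "\<exists>g. is_hom src tgt (Frep src tgt k) (Frep src tgt (dv v) :: ('v, 'a, 'k) rep) g \<and>
     hcomp (Frep src tgt k) g (dmap src tgt k) = zero_hom \<and>
     \<not> (\<exists>h. is_hom src tgt (Frep src tgt m) (Frep src tgt (dv v) :: ('v, 'a, 'k) rep) h \<and>
            hcomp (Frep src tgt m) h (dext \<iota> k) = g)"
proof -
  define rowY where "rowY = (\<lambda>a. dv v (tgt a) + rpos src tgt (dv v) a)"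
  define pF where "pF = (\<lambda>a. m (tgt a) + rpos src tgt m a + 0)"
  have rowY_lt: "rowY a < Fdim src tgt (dv v) (tgt a)" if "src a = v" for a
    using rpos_bound[where src=src and tgt=tgt and m="dv v" and a=a and j=0] that
    unfolding rowY_def Fdim_def dv_def by simp
  have rowY_ge: "dv v (tgt a) \<le> rowY a" for a unfolding rowY_def by simp
  have pF_lt: "pF a < Fdim src tgt m (tgt a)" if "src a = v" for a
    using rpos_bound[where src=src and tgt=tgt and m=m and a=a and j=0] that mv
    unfolding pF_def Fdim_def by simp
  have pF_ne: "pF a1 \<noteq> pF a2" if "tgt a1 = tgt a2"
    using rpos_inj[where src=src and tgt=tgt and m=m and a=a1 and a'=a2 and l=0 and l'=0] that a12 mv
    unfolding pF_def by auto
  define \<psi> where "\<psi> = (\<lambda>y i j. if y = tgt a1 \<and> i = rowY a1 \<and> j < k y then \<iota> y (pF a1) j else 0)"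
  define g where "g = dext \<psi> k"
  have gh: "is_hom src tgt (Frep src tgt k) (Frep src tgt (dv v) :: ('v, 'a, 'k) rep) g"
    unfolding g_def
  proof (rule is_hom_dext[OF is_rep_Frep])
    fix y show "mat_on (rdim (Frep src tgt (dv v) :: ('v, 'a, 'k) rep) y) (k y) (\<psi> y)"
      unfolding mat_on_def \<psi>_def using rowY_lt[OF a12(2)] by auto
  next
    fix a :: 'a and i l
    show "mmul (rdim (Frep src tgt (dv v) :: ('v, 'a, 'k) rep) (src a)) (ract (Frep src tgt (dv v) :: ('v, 'a, 'k) rep) a) (\<psi> (src a)) i l = 0"
      unfolding mmul_def ract_Frep Fact_def
    proof (intro sum.neutral ballI)
      fix r assume r: "r \<in> {..<rdim (Frep src tgt (dv v) :: ('v, 'a, 'k) rep) (src a)}"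
      show "(if r < dv v (src a) \<and> i = dv v (tgt a) + rpos src tgt (dv v) a + r then 1 else 0) * \<psi> (src a) r l = 0"
      proof (cases "r < dv v (src a)")
        case True
        then have "src a = v" "r = 0" unfolding dv_def by (auto split: if_splits)
        moreover have "rowY a1 \<noteq> 0" if "v = tgt a1" using rowY_ge[of a1] that unfolding dv_def by simp
        ultimately show ?thesis unfolding \<psi>_def by auto
      qed simp
    qed
  qed
  have gz: "hcomp (Frep src tgt k) g (dmap src tgt k) = zero_hom" unfolding g_def by (rule dext_dmap_zero)
  have "\<not> (\<exists>h. is_hom src tgt (Frep src tgt m) (Frep src tgt (dv v) :: ('v, 'a, 'k) rep) h \<and>
            hcomp (Frep src tgt m) h (dext \<iota> k) = g)"
  proof
    assume "\<exists>h. is_hom src tgt (Frep src tgt m) (Frep src tgt (dv v) :: ('v, 'a, 'k) rep) h \<and>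
            hcomp (Frep src tgt m) h (dext \<iota> k) = g"
    then obtain h where hh: "is_hom src tgt (Frep src tgt m) (Frep src tgt (dv v) :: ('v, 'a, 'k) rep) h"
      and hg: "hcomp (Frep src tgt m) h (dext \<iota> k) = g" by blast
    have key: "(if i = rowY a then h v 0 0 else 0) =
        (if tgt a = tgt a1 \<and> i = rowY a1 \<and> pF a = pF a1 then 1 else 0)" if sa: "src a = v" for a i
    proof -
      define y where "y = tgt a"
      define u where "u = (\<lambda>j. if j = pF a then 1 else (0::'k))"
      have u: "u \<in> vspace (Fdim src tgt m y)" using pF_lt[OF sa] unfolding u_def y_def vspace_def by auto
      have u0: "\<forall>i<m y. u i = 0" unfolding u_def y_def pF_def by auto
      obtain w where w: "w \<in> vspace (k y)" "mvec (k y) (\<iota> y) w = u" using spanrad[OF u u0] by blast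
      have "mvec (Fdim src tgt k y) (hcomp (Frep src tgt m) h (dext \<iota> k) y) w
          = mvec (Fdim src tgt m y) (h y) (mvec (Fdim src tgt k y) (dext \<iota> k y) w)"
        using mvec_hcomp[of "Frep src tgt k" y "Frep src tgt m" h "dext \<iota> k" w] by simp
      also have "mvec (Fdim src tgt k y) (dext \<iota> k y) w = u"
        using w(2) by (simp add: mvec_dext Fdim_def)
      also have "mvec (Fdim src tgt m y) (h y) u = (\<lambda>i. h y i (pF a))"
        unfolding u_def by (rule mvec_unit) (use pF_lt[OF sa] y_def in simp)
      finally have L: "mvec (Fdim src tgt k y) (g y) w = (\<lambda>i. h y i (pF a))" unfolding hg .
      have "h y i (pF a) = mmul (rdim (Frep src tgt m :: ('v, 'a, 'k) rep) (tgt a)) (h (tgt a)) (ract (Frep src tgt m :: ('v, 'a, 'k) rep) a) i 0"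
        unfolding rdim_Frep ract_Frep mmul_Fact using mv sa unfolding pF_def y_def by simp
      also have "\<dots> = mmul (rdim (Frep src tgt (dv v) :: ('v, 'a, 'k) rep) (src a)) (ract (Frep src tgt (dv v) :: ('v, 'a, 'k) rep) a) (h (src a)) i 0"
        using is_homD(4)[OF hh, of a] by simp
      also have "\<dots> = (if i = rowY a then h v 0 0 else 0)"
        unfolding rdim_Frep ract_Frep Fact_dv_col0[where src=src and tgt=tgt and a=a and v=v, OF sa] rowY_def using sa by simp
      finally have H: "h y i (pF a) = (if i = rowY a then h v 0 0 else 0)" .
      have "mvec (Fdim src tgt k y) (g y) w i = mvec (k y) (\<psi> y) w i"
        unfolding g_def by (simp add: mvec_dext Fdim_def)
      also have "\<dots> = (if y = tgt a1 \<and> i = rowY a1 then mvec (k y) (\<iota> y) w (pF a1) else 0)"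
        unfolding mvec_def \<psi>_def by (auto intro!: sum.cong)
      also have "\<dots> = (if tgt a = tgt a1 \<and> i = rowY a1 \<and> pF a = pF a1 then 1 else 0)"
        using fun_cong[OF w(2), of "pF a1"] unfolding u_def y_def by auto
      finally show ?thesis using L H by (metis)
    qed
    have "h v 0 0 = 1" using key[OF a12(2), of "rowY a1"] by simp
    moreover have "h v 0 0 = 0" using key[OF a12(3), of "rowY a2"] pF_ne by (auto split: if_splits)
    ultimately show False by simp
  qed
  then show ?thesis using gh gz by blast
qed


lemma cocycle_B:
  fixes \<iota> :: "('v, 'k::field) hom" and tgt :: "'a::finite \<Rightarrow> 'v"
  assumes sink: "\<And>a. src a \<noteq> v" and mu0: "\<mu> v = 0"
    and kap: "w \<in> vspace (k v)" "mvec (k v) (\<iota> v) w p = 1"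
  shows "\<exists>g. is_hom src tgt (Frep src tgt k) (Frep src tgt (dv v) :: ('v, 'a, 'k) rep) g \<and>
     hcomp (Frep src tgt k) g (dmap src tgt k) = zero_hom \<and>
     \<not> (\<exists>h. is_hom src tgt (Frep src tgt \<mu>) (Frep src tgt (dv v) :: ('v, 'a, 'k) rep) h \<and>
            hcomp (Frep src tgt \<mu>) h (dext \<iota> k) = g)"
proof -
  define \<psi> where "\<psi> = (\<lambda>y (i::nat) j. if y = v \<and> i = 0 \<and> j < k y then \<iota> y p j else 0)"
  define g where "g = dext \<psi> k"
  have gh: "is_hom src tgt (Frep src tgt k) (Frep src tgt (dv v) :: ('v, 'a, 'k) rep) g"
    unfolding g_def
  proof (rule is_hom_dext[OF is_rep_Frep])
    fix y show "mat_on (rdim (Frep src tgt (dv v) :: ('v, 'a, 'k) rep) y) (k y) (\<psi> y)"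
      unfolding mat_on_def \<psi>_def by (auto simp: Fdim_def dv_def)
  next
    fix a :: 'a and i l
    show "mmul (rdim (Frep src tgt (dv v) :: ('v, 'a, 'k) rep) (src a)) (ract (Frep src tgt (dv v) :: ('v, 'a, 'k) rep) a) (\<psi> (src a)) i l = 0"
      unfolding mmul_def ract_Frep Fact_def using sink[of a] by (auto intro!: sum.neutral simp: dv_def)
  qed
  have gz: "hcomp (Frep src tgt k) g (dmap src tgt k) = zero_hom" unfolding g_def by (rule dext_dmap_zero)
  have "\<not> (\<exists>h. is_hom src tgt (Frep src tgt \<mu>) (Frep src tgt (dv v) :: ('v, 'a, 'k) rep) h \<and>
            hcomp (Frep src tgt \<mu>) h (dext \<iota> k) = g)"
  proof
    assume "\<exists>h. is_hom src tgt (Frep src tgt \<mu>) (Frep src tgt (dv v) :: ('v, 'a, 'k) rep) h \<and>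
            hcomp (Frep src tgt \<mu>) h (dext \<iota> k) = g"
    then obtain h where hh: "is_hom src tgt (Frep src tgt \<mu>) (Frep src tgt (dv v) :: ('v, 'a, 'k) rep) h"
      and hg: "hcomp (Frep src tgt \<mu>) h (dext \<iota> k) = g" by blast
    have h0: "h v 0 q = 0" for q
    proof (cases "q < Fdim src tgt \<mu> v")
      case True
      have nt: "\<not> q < \<mu> v" using mu0 by simp
      obtain a l where a: "tgt a = v" "l < \<mu> (src a)" "q = \<mu> v + rpos src tgt \<mu> a + l"
        using col_cases[OF True nt] by blast
      have "h v 0 q = mmul (rdim (Frep src tgt \<mu> :: ('v, 'a, 'k) rep) (tgt a)) (h (tgt a)) (ract (Frep src tgt \<mu> :: ('v, 'a, 'k) rep) a) 0 l"
        unfolding rdim_Frep ract_Frep mmul_Fact using a by simp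
      also have "\<dots> = mmul (rdim (Frep src tgt (dv v) :: ('v, 'a, 'k) rep) (src a)) (ract (Frep src tgt (dv v) :: ('v, 'a, 'k) rep) a) (h (src a)) 0 l"
        using is_homD(4)[OF hh, of a] by simp
      also have "\<dots> = 0" unfolding mmul_def ract_Frep Fact_def using sink[of a] by (auto intro!: sum.neutral simp: dv_def)
      finally show ?thesis .
    next
      case False
      then show ?thesis using mat_onD[OF is_homD(3)[OF hh, of v], of 0 q] by simp
    qed
    have "mvec (k v) (\<iota> v) w p = (\<Sum>j<k v. \<iota> v p j * w j)" unfolding mvec_def ..
    then obtain j where j: "j < k v" "\<iota> v p j \<noteq> 0" using kap(2)
      by (metis (no_types, lifting) mult_zero_left sum.neutral zero_neq_one lessThan_iff)
    have "g v 0 j = \<iota> v p j" unfolding g_def dext_def \<psi>_def using j(1) by simp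
    moreover have "hcomp (Frep src tgt \<mu>) h (dext \<iota> k) v 0 j = 0" unfolding hcomp_def mmul_def h0 by simp
    ultimately show False using hg j(2) by simp
  qed
  then show ?thesis using gh gz by blast
qed


definition lb :: "('a::finite \<Rightarrow> 'v) \<Rightarrow> ('a \<Rightarrow> 'v) \<Rightarrow> 'v \<Rightarrow> 'a \<Rightarrow> nat" where
  "lb src tgt v a = psum (bI src tgt v (src a)) (ain a)"

lemma lb_lt: "tgt b = v \<Longrightarrow> lb src tgt v b < cnt src tgt v (src b)"
  unfolding lb_def cnt_def
  using psum_bound[OF ain_lt[of b], of 0 "bI src tgt v (src b)"] bI_ain[where tgt=tgt and b=b and v=v and src=src] by simp

definition cov_eps :: "('a::finite \<Rightarrow> 'v) \<Rightarrow> ('a \<Rightarrow> 'v) \<Rightarrow> 'v \<Rightarrow> ('v, 'k::field) hom" where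
  "cov_eps src tgt v = (\<lambda>x i j. if j < cnt src tgt v x \<and> i = (if x = v then 1 else 0) + j then 1 else 0)"

definition cov :: "('a::finite \<Rightarrow> 'v) \<Rightarrow> ('a \<Rightarrow> 'v) \<Rightarrow> 'v \<Rightarrow> ('v, 'k::field) hom" where
  "cov src tgt v = fext src tgt (Irep src tgt v :: ('v, 'a, 'k) rep) (cnt src tgt v) (cov_eps src tgt v)"

lemma is_hom_cov: "is_hom src tgt (Frep src tgt (cnt src tgt v)) (Irep src tgt v :: ('v, 'a::finite, 'k::field) rep) (cov src tgt v)"
  unfolding cov_def
  by (rule is_hom_fext[OF is_rep_Irep]) (auto simp: mat_on_def cov_eps_def Idim_def)

lemma cov_top: "q < cnt src tgt v y \<Longrightarrow> (cov src tgt v :: ('v, 'k::field) hom) y i q = cov_eps src tgt v y i q"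
  unfolding cov_def by (rule fext_top)

lemma cov_rad:
  assumes "tgt a = y" "l < cnt src tgt v (src a)"
  shows "(cov src tgt v :: ('v, 'k::field) hom) y i (cnt src tgt v y + rpos src tgt (cnt src tgt v) a + l)
     = (if tgt a = v \<and> i = 0 \<and> l = lb src tgt v a then 1 else 0)"
proof -
  have "(cov src tgt v :: ('v, 'k) hom) y i (cnt src tgt v y + rpos src tgt (cnt src tgt v) a + l)
     = mmul (Idim src tgt v (src a)) (Iact src tgt v a) (cov_eps src tgt v (src a)) i l"
    unfolding cov_def mmul_def
    using fext_rad[where src=src and tgt=tgt and m="cnt src tgt v" and N="Irep src tgt v :: ('v, 'a, 'k) rep"
        and \<phi>="cov_eps src tgt v", OF assms] by simp
  also have "\<dots> = (if tgt a = v \<and> i = 0 then cov_eps src tgt v (src a) (ipos src tgt v a) l else 0)"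
    by (rule mmul_Iact)
  also have "\<dots> = (if tgt a = v \<and> i = 0 \<and> l = lb src tgt v a then 1 else 0)"
    unfolding cov_eps_def ipos_def lb_def using assms(2) by auto
  finally show ?thesis .
qed

lemma cov_rad0:
  assumes "cnt src tgt v y \<le> q" "\<not> (y = v \<and> i = 0)"
  shows "(cov src tgt v :: ('v, 'k::field) hom) y i q = 0"
proof (cases "q < Fdim src tgt (cnt src tgt v) y")
  case True
  have nq: "\<not> q < cnt src tgt v y" using assms by simp
  obtain a l where a: "tgt a = y" "l < cnt src tgt v (src a)" "q = cnt src tgt v y + rpos src tgt (cnt src tgt v) a + l"
    using col_cases[OF True nq] by blast
  show ?thesis unfolding a(3) cov_rad[where src=src and tgt=tgt, OF a(1) a(2)] using assms(2) a(1) by auto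
next
  case False
  then show ?thesis unfolding cov_def by (simp add: fext_out)
qed

lemma cov_kernel_rad:
  assumes x: "x \<in> vspace (Fdim src tgt (cnt src tgt v) y)"
    and z: "mvec (Fdim src tgt (cnt src tgt v) y) ((cov src tgt v :: ('v, 'k::field) hom) y) x = (\<lambda>_. 0)"
    and q: "q < cnt src tgt v y"
  shows "x q = 0"
proof -
  define i where "i = (if y = v then 1 else 0) + q"
  have "mvec (Fdim src tgt (cnt src tgt v) y) ((cov src tgt v :: ('v, 'k) hom) y) x i
     = (\<Sum>q'<cnt src tgt v y. cov_eps src tgt v y i q' * x q') +
       (\<Sum>q'<sig src tgt (cnt src tgt v) y. (cov src tgt v :: ('v, 'k) hom) y i (cnt src tgt v y + q') * x (cnt src tgt v y + q'))"
    unfolding mvec_def Fdim_def sum_split_add by (simp add: cov_top)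
  also have "(\<Sum>q'<sig src tgt (cnt src tgt v) y. (cov src tgt v :: ('v, 'k) hom) y i (cnt src tgt v y + q') * x (cnt src tgt v y + q')) = 0"
    by (intro sum.neutral ballI) (simp add: cov_rad0 i_def)
  also have "(\<Sum>q'<cnt src tgt v y. cov_eps src tgt v y i q' * x q') = x q"
    unfolding cov_eps_def i_def using q by (simp add: if_distrib[of "\<lambda>x. x * _"] sum.delta cong: if_cong)
  finally show ?thesis using z by simp
qed

lemma mvec_add_vec: "mvec n A (\<lambda>q. x q + y q) = (\<lambda>i. mvec n A x i + mvec n A y i)"
  unfolding mvec_def by (auto intro!: ext simp: algebra_simps sum.distrib)

lemma mvec_support: "(\<forall>q. c \<le> q \<longrightarrow> z q = 0) \<Longrightarrow> c \<le> n \<Longrightarrow> mvec n A z = mvec c A z"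
proof -
  assume z: "\<forall>q. c \<le> q \<longrightarrow> z q = 0" and cn: "c \<le> n"
  obtain d where n: "n = c + d" using cn by (metis le_add_diff_inverse)
  show ?thesis unfolding mvec_def n sum_split_add using z by simp
qed

lemma cov_surj:
  assumes b: "tgt b = v"
  shows "hom_surj (Frep src tgt (cnt src tgt v)) (Irep src tgt v :: ('v, 'a::finite, 'k::field) rep) (cov src tgt v)"
  unfolding hom_surj_def
proof (intro allI ballI)
  fix x and y :: "'k vec"
  assume y: "y \<in> vspace (rdim (Irep src tgt v :: ('v, 'a, 'k) rep) x)"
  define c where "c = (if x = v then 1 else 0 :: nat)"
  define pb where "pb = cnt src tgt v v + rpos src tgt (cnt src tgt v) b + lb src tgt v b"
  define z1 where "z1 = (\<lambda>q. if q < cnt src tgt v x then y (c + q) else 0)"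
  define z2 where "z2 = (\<lambda>q. if x = v \<and> q = pb then y 0 else 0)"
  have lbb: "lb src tgt v b < cnt src tgt v (src b)" using lb_lt[where src=src and tgt=tgt and b=b and v=v, OF b] .
  have pbF: "pb < Fdim src tgt (cnt src tgt v) v"
    using rpos_bound[where src=src and tgt=tgt and m="cnt src tgt v" and a=b, OF lbb] b unfolding pb_def Fdim_def by simp
  have m1: "mvec (Fdim src tgt (cnt src tgt v) x) ((cov src tgt v :: ('v, 'k) hom) x) z1 =
      (\<lambda>i. if c \<le> i \<and> i < c + cnt src tgt v x then y i else 0)"
  proof -
    have "mvec (Fdim src tgt (cnt src tgt v) x) ((cov src tgt v :: ('v, 'k) hom) x) z1
        = mvec (cnt src tgt v x) ((cov src tgt v :: ('v, 'k) hom) x) z1"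
      by (rule mvec_support) (auto simp: z1_def Fdim_def)
    also have "\<dots> = mvec (cnt src tgt v x) (cov_eps src tgt v x) z1"
      unfolding mvec_def by (intro ext sum.cong) (auto simp: cov_top)
    also have "\<dots> = (\<lambda>i. if c \<le> i \<and> i < c + cnt src tgt v x then y i else 0)"
    proof (intro ext)
      fix i
      show "mvec (cnt src tgt v x) (cov_eps src tgt v x) z1 i = (if c \<le> i \<and> i < c + cnt src tgt v x then y i else 0)"
      proof (cases "c \<le> i \<and> i < c + cnt src tgt v x")
        case True
        then have e: "\<And>j. (j < cnt src tgt v x \<and> i = c + j) = (j = i - c)" by auto
        have "mvec (cnt src tgt v x) (cov_eps src tgt v x) z1 i = (\<Sum>j<cnt src tgt v x. if j = i - c then z1 j else 0)"
          unfolding mvec_def cov_eps_def c_def[symmetric] e by (simp add: if_distrib[of "\<lambda>x. x * _"] cong: if_cong)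
        also have "\<dots> = y i"
        proof -
          have "i - c < cnt src tgt v x" using True by linarith
          then show ?thesis using True by (simp add: sum.delta z1_def)
        qed
        finally show ?thesis using True by simp
      next
        case False
        then show ?thesis unfolding mvec_def cov_eps_def c_def[symmetric] by (auto intro!: sum.neutral)
      qed
    qed
    finally show ?thesis .
  qed
  have m2: "mvec (Fdim src tgt (cnt src tgt v) x) ((cov src tgt v :: ('v, 'k) hom) x) z2 =
      (\<lambda>i. if x = v \<and> i = 0 then y 0 else 0)"
  proof (cases "x = v")
    case True
    have "mvec (Fdim src tgt (cnt src tgt v) x) ((cov src tgt v :: ('v, 'k) hom) x) z2 =
        (\<lambda>i. y 0 * (cov src tgt v :: ('v, 'k) hom) v i pb)"
    proof (intro ext)
      fix i
      have "\<And>j. (cov src tgt v :: ('v, 'k) hom) x i j * z2 j = (if j = pb then y 0 * (cov src tgt v :: ('v, 'k) hom) v i pb else 0)"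
        using True unfolding z2_def by (auto simp: mult.commute)
      then show "mvec (Fdim src tgt (cnt src tgt v) x) ((cov src tgt v :: ('v, 'k) hom) x) z2 i = y 0 * (cov src tgt v :: ('v, 'k) hom) v i pb"
        unfolding mvec_def using pbF True by (simp add: sum.delta)
    qed
    also have "\<dots> = (\<lambda>i. if x = v \<and> i = 0 then y 0 else 0)"
    proof (intro ext)
      fix i
      have cr: "(cov src tgt v :: ('v, 'k) hom) v i pb = (if i = 0 then 1 else 0)"
        unfolding pb_def using cov_rad[where src=src and tgt=tgt and v=v and a=b and y=v and l="lb src tgt v b" and i=i, OF b lbb] b by simp
      show "y 0 * (cov src tgt v :: ('v, 'k) hom) v i pb = (if x = v \<and> i = 0 then y 0 else 0)"
        unfolding cr using True by simp
    qed
    finally show ?thesis .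
  next
    case False
    then show ?thesis unfolding mvec_def z2_def by simp
  qed
  define z where "z = (\<lambda>q. z1 q + z2 q)"
  have "z \<in> vspace (Fdim src tgt (cnt src tgt v) x)"
    using pbF unfolding z_def z1_def z2_def vspace_def Fdim_def by auto
  moreover have "mvec (Fdim src tgt (cnt src tgt v) x) ((cov src tgt v :: ('v, 'k) hom) x) z = y"
  proof (intro ext)
    fix i
    have "mvec (Fdim src tgt (cnt src tgt v) x) ((cov src tgt v :: ('v, 'k) hom) x) z i =
        (if c \<le> i \<and> i < c + cnt src tgt v x then y i else 0) + (if x = v \<and> i = 0 then y 0 else 0)"
      unfolding z_def mvec_add_vec m1 m2 by simp
    also have "\<dots> = y i" using y unfolding vspace_def c_def rdim_Irep Idim_def by (auto split: if_splits)
    finally show "mvec (Fdim src tgt (cnt src tgt v) x) ((cov src tgt v :: ('v, 'k) hom) x) z i = y i" .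
  qed
  ultimately show "\<exists>z\<in>vspace (rdim (Frep src tgt (cnt src tgt v) :: ('v, 'a, 'k) rep) x).
      mvec (rdim (Frep src tgt (cnt src tgt v) :: ('v, 'a, 'k) rep) x) (cov src tgt v x) z = y" by auto
qed


lemma mvec_scale_vec: "mvec n A (\<lambda>q. c * x q) = (\<lambda>i. c * mvec n A x i)"
  unfolding mvec_def by (auto intro!: ext simp: algebra_simps sum_distrib_left)

lemma kernel_basis:
  fixes E :: "('v, 'k::field) hom" and N' :: "'v \<Rightarrow> nat"
  shows "\<exists>k \<iota>. \<forall>y. mat_on (N' y) (k y) (\<iota> y) \<and>
     (\<forall>w\<in>vspace (k y). mvec (k y) (\<iota> y) w = (\<lambda>_. 0) \<longrightarrow> w = (\<lambda>_. 0)) \<and>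
     (\<forall>x. (x \<in> vspace (N' y) \<and> mvec (N' y) (E y) x = (\<lambda>_. 0)) \<longleftrightarrow> (\<exists>w\<in>vspace (k y). mvec (k y) (\<iota> y) w = x))"
proof -
  define P where "P = (\<lambda>y r B. mat_on (N' y) r B \<and> (\<forall>w\<in>vspace r. mvec r B w = (\<lambda>_. 0) \<longrightarrow> w = (\<lambda>_. (0::'k))) \<and>
           (\<forall>x. (x \<in> vspace (N' y) \<and> mvec (N' y) (E y) x = (\<lambda>_. 0)) \<longleftrightarrow> (\<exists>w\<in>vspace r. mvec r B w = x)))"
  have "\<forall>y. \<exists>rB. P y (fst rB) (snd rB)"
  proof
    fix y
    have "\<exists>r B. mat_on (N' y) r B \<and> (\<forall>w\<in>vspace r. mvec r B w = (\<lambda>_. 0) \<longrightarrow> w = (\<lambda>_. 0)) \<and>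
           (\<forall>x. x \<in> {x \<in> vspace (N' y). mvec (N' y) (E y) x = (\<lambda>_. 0)} \<longleftrightarrow> (\<exists>w\<in>vspace r. mvec r B w = x))"
    proof (rule subspace_basis)
      show "{x \<in> vspace (N' y). mvec (N' y) (E y) x = (\<lambda>_. 0)} \<subseteq> vspace (N' y)" by auto
      show "(\<lambda>_. 0) \<in> {x \<in> vspace (N' y). mvec (N' y) (E y) x = (\<lambda>_. 0)}" by (simp add: vspace_def mvec_zero_vec)
      show "\<forall>x\<in>{x \<in> vspace (N' y). mvec (N' y) (E y) x = (\<lambda>_. 0)}. \<forall>z\<in>{x \<in> vspace (N' y). mvec (N' y) (E y) x = (\<lambda>_. 0)}.
          (\<lambda>i. x i + z i) \<in> {x \<in> vspace (N' y). mvec (N' y) (E y) x = (\<lambda>_. 0)}"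
        by (auto simp: vspace_def mvec_add_vec)
      show "\<forall>c. \<forall>x\<in>{x \<in> vspace (N' y). mvec (N' y) (E y) x = (\<lambda>_. 0)}. (\<lambda>i. c * x i) \<in> {x \<in> vspace (N' y). mvec (N' y) (E y) x = (\<lambda>_. 0)}"
        by (auto simp: vspace_def mvec_scale_vec)
    qed
    then obtain r B where "P y r B" unfolding P_def by auto
    then show "\<exists>rB. P y (fst rB) (snd rB)" by (intro exI[of _ "(r, B)"]) simp
  qed
  then obtain f where f: "\<forall>y. P y (fst (f y)) (snd (f y))" by (metis choice)
  show ?thesis
    by (rule exI[of _ "\<lambda>y. fst (f y)"], rule exI[of _ "\<lambda>y. snd (f y)"]) (use f in \<open>simp add: P_def\<close>)
qed


lemma cov_resolution:
  assumes b: "tgt b = v"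
  shows "\<exists>k \<iota>. proj_resolution src tgt (Irep src tgt v :: ('v, 'a::finite, 'k::field) rep)
      (resP src tgt (cnt src tgt v) k) (resd src tgt \<iota> k) (cov src tgt v) \<and>
     (\<forall>x. x \<in> vspace (Fdim src tgt (cnt src tgt v) v) \<longrightarrow>
        mvec (Fdim src tgt (cnt src tgt v) v) ((cov src tgt v :: ('v, 'k) hom) v) x = (\<lambda>_. 0) \<longrightarrow>
        (\<exists>w\<in>vspace (k v). mvec (k v) (\<iota> v) w = x))"
proof -
  obtain k \<iota> where B: "\<And>y. mat_on (Fdim src tgt (cnt src tgt v) y) (k y) (\<iota> y)"
    "\<And>y w. w \<in> vspace (k y) \<Longrightarrow> mvec (k y) (\<iota> y) w = (\<lambda>_. 0) \<Longrightarrow> w = (\<lambda>_. (0::'k))"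
    "\<And>y x. (x \<in> vspace (Fdim src tgt (cnt src tgt v) y) \<and>
        mvec (Fdim src tgt (cnt src tgt v) y) ((cov src tgt v :: ('v, 'k) hom) y) x = (\<lambda>_. 0)) \<longleftrightarrow>
        (\<exists>w\<in>vspace (k y). mvec (k y) (\<iota> y) w = x)"
    using kernel_basis[where E="cov src tgt v :: ('v, 'k) hom" and N'="Fdim src tgt (cnt src tgt v)"] by blast
  have rad: "\<iota> y i j = 0" if i: "i < cnt src tgt v y" for y i j
  proof (cases "j < k y")
    case True
    define u where "u = (\<lambda>q. if q = j then 1 else (0::'k))"
    have u: "u \<in> vspace (k y)" unfolding u_def vspace_def using True by auto
    have col: "mvec (k y) (\<iota> y) u = (\<lambda>i. \<iota> y i j)" unfolding u_def by (rule mvec_unit[OF True])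
    have "(\<lambda>i. \<iota> y i j) \<in> vspace (Fdim src tgt (cnt src tgt v) y) \<and>
        mvec (Fdim src tgt (cnt src tgt v) y) ((cov src tgt v :: ('v, 'k) hom) y) (\<lambda>i. \<iota> y i j) = (\<lambda>_. 0)"
      using B(3)[of "\<lambda>i. \<iota> y i j" y] u col by blast
    then show ?thesis using cov_kernel_rad[OF _ _ i] by blast
  next
    case False then show ?thesis using mat_onD[OF B(1)[of y]] by simp
  qed
  have "proj_resolution src tgt (Irep src tgt v :: ('v, 'a, 'k) rep)
      (resP src tgt (cnt src tgt v) k) (resd src tgt \<iota> k) (cov src tgt v)"
  proof (rule resolution)
    show "is_hom src tgt (Frep src tgt (cnt src tgt v)) (Irep src tgt v :: ('v, 'a, 'k) rep) (cov src tgt v)"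
      by (rule is_hom_cov)
    show "hom_surj (Frep src tgt (cnt src tgt v)) (Irep src tgt v :: ('v, 'a, 'k) rep) (cov src tgt v)"
      by (rule cov_surj[where src=src and tgt=tgt and b=b and v=v, OF b])
    show "\<And>y. mat_on (Fdim src tgt (cnt src tgt v) y) (k y) (\<iota> y)" by (rule B(1))
    show "\<And>y i j. i < cnt src tgt v y \<Longrightarrow> \<iota> y i j = 0" by (rule rad)
    show "\<And>y w. w \<in> vspace (k y) \<Longrightarrow> mvec (k y) (\<iota> y) w = (\<lambda>_. 0) \<Longrightarrow> w = (\<lambda>_. 0)" by (rule B(2))
    show "\<And>y x. x \<in> vspace (Fdim src tgt (cnt src tgt v) y) \<Longrightarrow>
        (mvec (Fdim src tgt (cnt src tgt v) y) (cov src tgt v y) x = (\<lambda>_. 0)) = (\<exists>w\<in>vspace (k y). mvec (k y) (\<iota> y) w = x)"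
      using B(3) by blast
  qed
  moreover have "\<forall>x. x \<in> vspace (Fdim src tgt (cnt src tgt v) v) \<longrightarrow>
        mvec (Fdim src tgt (cnt src tgt v) v) ((cov src tgt v :: ('v, 'k) hom) v) x = (\<lambda>_. 0) \<longrightarrow>
        (\<exists>w\<in>vspace (k v). mvec (k v) (\<iota> v) w = x)"
    using B(3) by blast
  ultimately show ?thesis by blast
qed

lemma ish_span:
  assumes x: "x \<in> vspace (Fdim src tgt m y)" and x0: "\<forall>i<m y. x i = 0"
  shows "\<exists>w\<in>vspace (sig src tgt m y). mvec (sig src tgt m y) (ish src tgt m y) w = x"
proof -
  obtain z where z: "mvec (Fdim src tgt (sig src tgt m) y) (dmap src tgt m y) z = x"
    using image_dmap[OF x] x0 by blast
  define w where "w = (\<lambda>j. if j < sig src tgt m y then z j else 0)"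
  have "w \<in> vspace (sig src tgt m y)" unfolding w_def vspace_def by auto
  moreover have "mvec (sig src tgt m y) (ish src tgt m y) w = x"
  proof -
    have "mvec (sig src tgt m y) (ish src tgt m y) w = mvec (sig src tgt m y) (ish src tgt m y) z"
      unfolding w_def by (rule mvec_restrict[symmetric])
    also have "\<dots> = mvec (Fdim src tgt (sig src tgt m) y) (dmap src tgt m y) z"
      unfolding dmap_def by (rule mvec_dext[symmetric]) (simp add: Fdim_def)
    finally show ?thesis using z by simp
  qed
  ultimately show ?thesis by blast
qed

lemma ish_rad: "i < m y \<Longrightarrow> mvec (sig src tgt m y) (ish src tgt m y) w i = 0"
  by (simp add: mvec_ish)

definition cova :: "('a::finite \<Rightarrow> 'v) \<Rightarrow> ('a \<Rightarrow> 'v) \<Rightarrow> 'v \<Rightarrow> ('v, 'k::field) hom" where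
  "cova src tgt v = fext src tgt (Irep src tgt v :: ('v, 'a, 'k) rep) (dv v) (\<lambda>x i j. if x = v \<and> i = 0 \<and> j = 0 then 1 else 0)"

lemma cnt_noin: "(\<And>a. tgt a \<noteq> v) \<Longrightarrow> cnt src tgt v x = 0"
  unfolding cnt_def psum_def bI_def by simp

lemma cova_val:
  assumes noin: "\<And>a. tgt a \<noteq> v"
  shows "(cova src tgt v :: ('v, 'k::field) hom) y i q = (if y = v \<and> i = 0 \<and> q = 0 then 1 else 0)"
proof (cases "q < dv v y")
  case True
  then show ?thesis unfolding cova_def by (simp add: fext_top dv_def split: if_splits)
next
  case False
  note nq = this
  show ?thesis
  proof (cases "q < Fdim src tgt (dv v) y")
    case True
    obtain a l where a: "tgt a = y" "l < dv v (src a)" "q = dv v y + rpos src tgt (dv v) a + l"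
      using col_cases[OF True nq] by blast
    have "(cova src tgt v :: ('v, 'k) hom) y i q = mmul (Idim src tgt v (src a)) (Iact src tgt v a)
        (\<lambda>i j. if src a = v \<and> i = 0 \<and> j = 0 then 1 else 0) i l"
      unfolding cova_def a(3) mmul_def
      using fext_rad[where src=src and tgt=tgt and m="dv v" and N="Irep src tgt v :: ('v, 'a, 'k) rep", OF a(1) a(2)] by simp
    also have "\<dots> = 0" unfolding mmul_Iact using noin[of a] by simp
    finally show ?thesis using nq by (auto simp: dv_def)
  next
    case False
    then show ?thesis using nq unfolding cova_def by (auto simp: fext_out dv_def)
  qed
qed

lemma cova_resolution:
  assumes noin: "\<And>a. tgt a \<noteq> v"
  shows "proj_resolution src tgt (Irep src tgt v :: ('v, 'a::finite, 'k::field) rep)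
      (resP src tgt (dv v) (sig src tgt (dv v))) (resd src tgt (ish src tgt (dv v)) (sig src tgt (dv v))) (cova src tgt v)"
proof -
  have Id: "Idim src tgt v x = dv v x" for x unfolding Idim_def dv_def using cnt_noin[OF noin] by simp
  have mv: "mvec (Fdim src tgt (dv v) y) ((cova src tgt v :: ('v, 'k) hom) y) x = (\<lambda>i. if y = v \<and> i = 0 then x 0 else 0)"
    if "0 < Fdim src tgt (dv v) y" for x y
    unfolding mvec_def cova_val[OF noin] using that
    by (auto intro!: ext simp: if_distrib[of "\<lambda>x. x * _"] sum.delta cong: if_cong)
  have Fpos: "0 < Fdim src tgt (dv v) v" unfolding Fdim_def dv_def by simp
  show ?thesis
  proof (rule resolution)
    show "is_hom src tgt (Frep src tgt (dv v)) (Irep src tgt v :: ('v, 'a, 'k) rep) (cova src tgt v)"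
      unfolding cova_def by (rule is_hom_fext[OF is_rep_Irep]) (auto simp: mat_on_def Idim_def dv_def)
    show "hom_surj (Frep src tgt (dv v)) (Irep src tgt v :: ('v, 'a, 'k) rep) (cova src tgt v)"
      unfolding hom_surj_def
    proof (intro allI ballI)
      fix x and y :: "'k vec" assume y: "y \<in> vspace (rdim (Irep src tgt v :: ('v, 'a, 'k) rep) x)"
      then have y': "y \<in> vspace (dv v x)" using Id by simp
      show "\<exists>z\<in>vspace (rdim (Frep src tgt (dv v) :: ('v, 'a, 'k) rep) x).
          mvec (rdim (Frep src tgt (dv v) :: ('v, 'a, 'k) rep) x) (cova src tgt v x) z = y"
      proof (cases "x = v")
        case True
        have Fx: "0 < Fdim src tgt (dv v) x" using Fpos True by simp
        have "mvec (Fdim src tgt (dv v) x) ((cova src tgt v :: ('v, 'k) hom) x) y = y"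
          unfolding mv[OF Fx] using y' True unfolding vspace_def dv_def
          by (auto intro!: ext)
        moreover have "y \<in> vspace (Fdim src tgt (dv v) x)" using y' unfolding vspace_def Fdim_def by auto
        ultimately show ?thesis by auto
      next
        case False
        then have "y = (\<lambda>_. 0)" using y' unfolding vspace_def dv_def by auto
        moreover have "mvec (Fdim src tgt (dv v) x) ((cova src tgt v :: ('v, 'k) hom) x) (\<lambda>_. 0) = (\<lambda>_. 0)"
          by (rule mvec_zero_vec)
        ultimately show ?thesis by (auto simp: vspace_def)
      qed
    qed
    show "\<And>y. mat_on (Fdim src tgt (dv v) y) (sig src tgt (dv v) y) (ish src tgt (dv v) y)"
      unfolding mat_on_def ish_def Fdim_def by auto
    show "\<And>y i j. i < dv v y \<Longrightarrow> ish src tgt (dv v) y i j = 0" unfolding ish_def by auto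
    show "\<And>y w. w \<in> vspace (sig src tgt (dv v) y) \<Longrightarrow> mvec (sig src tgt (dv v) y) (ish src tgt (dv v) y) w = (\<lambda>_. 0) \<Longrightarrow> w = (\<lambda>_. 0)"
      by (rule ish_inj)
    fix y and x :: "'k vec" assume x: "x \<in> vspace (Fdim src tgt (dv v) y)"
    have "(mvec (Fdim src tgt (dv v) y) ((cova src tgt v :: ('v, 'k) hom) y) x = (\<lambda>_. 0)) \<longleftrightarrow> (\<forall>i<dv v y. x i = 0)"
    proof (cases "y = v")
      case True
      have Fy: "0 < Fdim src tgt (dv v) y" using Fpos True by simp
      show ?thesis unfolding mv[OF Fy] using True by (auto simp: fun_eq_iff dv_def)
    next
      case False
      have "mvec (Fdim src tgt (dv v) y) ((cova src tgt v :: ('v, 'k) hom) y) x = (\<lambda>_. 0)"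
        unfolding mvec_def cova_val[OF noin] using False by simp
      then show ?thesis using False by (simp add: dv_def)
    qed
    also have "\<dots> \<longleftrightarrow> (\<exists>w\<in>vspace (sig src tgt (dv v) y). mvec (sig src tgt (dv v) y) (ish src tgt (dv v) y) w = x)"
      using ish_span[OF x] ish_rad by metis
    finally show "(mvec (Fdim src tgt (dv v) y) (cova src tgt v y) x = (\<lambda>_. 0)) =
        (\<exists>w\<in>vspace (sig src tgt (dv v) y). mvec (sig src tgt (dv v) y) (ish src tgt (dv v) y) w = x)" .
  qed
qed


lemma mvec_diff_vec: "mvec n A (\<lambda>q. x q - y q) = (\<lambda>i. mvec n A x i - mvec n A y i)"
  for A :: "('k::field) mat"
  unfolding mvec_def by (auto intro!: ext simp: algebra_simps sum_subtractf)

lemma cov_kappa: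
  fixes src tgt :: "'a::finite \<Rightarrow> 'v"
  assumes b12: "b1 \<noteq> b2" "tgt b1 = v" "tgt b2 = v"
  defines "kp1 \<equiv> cnt src tgt v v + rpos src tgt (cnt src tgt v) b1 + lb src tgt v b1"
    and "kp2 \<equiv> cnt src tgt v v + rpos src tgt (cnt src tgt v) b2 + lb src tgt v b2"
  shows "(\<lambda>q. (if q = kp1 then 1 else 0) - (if q = kp2 then 1 else (0::'k::field))) \<in> vspace (Fdim src tgt (cnt src tgt v) v)
    \<and> mvec (Fdim src tgt (cnt src tgt v) v) ((cov src tgt v :: ('v, 'k) hom) v)
          (\<lambda>q. (if q = kp1 then 1 else 0) - (if q = kp2 then 1 else 0)) = (\<lambda>_. 0)
    \<and> kp1 \<noteq> kp2"
proof -
  have l1: "lb src tgt v b1 < cnt src tgt v (src b1)" by (rule lb_lt[where src=src and tgt=tgt and b=b1 and v=v, OF b12(2)])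
  have l2: "lb src tgt v b2 < cnt src tgt v (src b2)" by (rule lb_lt[where src=src and tgt=tgt and b=b2 and v=v, OF b12(3)])
  have p1F: "kp1 < Fdim src tgt (cnt src tgt v) v"
    using rpos_bound[where src=src and tgt=tgt and m="cnt src tgt v" and a=b1, OF l1] b12 unfolding kp1_def Fdim_def by simp
  have p2F: "kp2 < Fdim src tgt (cnt src tgt v) v"
    using rpos_bound[where src=src and tgt=tgt and m="cnt src tgt v" and a=b2, OF l2] b12 unfolding kp2_def Fdim_def by simp
  have ne: "kp1 \<noteq> kp2"
    using rpos_inj[where src=src and tgt=tgt and m="cnt src tgt v" and a=b1 and a'=b2 and l="lb src tgt v b1" and l'="lb src tgt v b2"]
      b12 l1 l2 unfolding kp1_def kp2_def by auto
  have c1: "(cov src tgt v :: ('v, 'k) hom) v i kp1 = (if i = 0 then 1 else 0)" for i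
    unfolding kp1_def using cov_rad[where src=src and tgt=tgt and v=v and a=b1 and y=v and l="lb src tgt v b1" and i=i, OF b12(2) l1] b12 by simp
  have c2: "(cov src tgt v :: ('v, 'k) hom) v i kp2 = (if i = 0 then 1 else 0)" for i
    unfolding kp2_def using cov_rad[where src=src and tgt=tgt and v=v and a=b2 and y=v and l="lb src tgt v b2" and i=i, OF b12(3) l2] b12 by simp
  have "(\<lambda>q. (if q = kp1 then 1 else 0) - (if q = kp2 then 1 else (0::'k))) \<in> vspace (Fdim src tgt (cnt src tgt v) v)"
    using p1F p2F unfolding vspace_def by auto
  moreover have "mvec (Fdim src tgt (cnt src tgt v) v) ((cov src tgt v :: ('v, 'k) hom) v)
          (\<lambda>q. (if q = kp1 then 1 else 0) - (if q = kp2 then 1 else 0)) = (\<lambda>_. 0)"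
    unfolding mvec_diff_vec mvec_unit[OF p1F] mvec_unit[OF p2F] c1 c2 by simp
  ultimately show ?thesis using ne by blast
qed

lemma Ext_zero_contra:
  assumes E: "Ext_zero src tgt i X Y" and R: "proj_resolution src tgt X P d e"
    and g: "is_hom src tgt (P i) Y g" "hcomp (P i) g (d i) = zero_hom"
    and nh: "\<not> (\<exists>h. is_hom src tgt (P (i - 1)) Y h \<and> hcomp (P (i - 1)) h (d (i - 1)) = g)"
  shows False
  using E R g nh unfolding Ext_zero_def by blast

lemma zero_card_lemma:
  fixes P :: "'a::finite \<Rightarrow> bool"
  assumes "\<not> 1 \<le> card {a. P a}"
  shows "\<forall>a. \<not> P a"
proof -
  have f: "finite {a. P a}" by (rule finite_subset[OF subset_UNIV finite_UNIV])
  have "card {a. P a} = 0" using assms by linarith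
  then have "{a. P a} = {}" using f by simp
  then show ?thesis by auto
qed

theorem lemma2p3:
  fixes src tgt :: "'a::finite \<Rightarrow> 'v::finite"
    and C :: "('v, 'a, 'k::field) rep set"
    and n :: nat and v :: 'v
  assumes "quiver_connected src tgt"
    and "2 \<le> n"
    and "n_cluster_tilting src tgt n C"
  shows "(outdeg src v = 2 \<longrightarrow> 1 \<le> indeg tgt v) \<and>
         (indeg tgt v = 2 \<longrightarrow> 1 \<le> outdeg src v) \<and>
         (indeg tgt v = 2 \<and> outdeg src v = 2 \<longrightarrow> n = 2)"
proof -
  have C1: "C = {X. is_rep src tgt X \<and> (\<forall>i. 0 < i \<and> i < n \<longrightarrow> (\<forall>Y\<in>C. Ext_zero src tgt i X Y))}"
    and C2: "C = {X. is_rep src tgt X \<and> (\<forall>i. 0 < i \<and> i < n \<longrightarrow> (\<forall>Y\<in>C. Ext_zero src tgt i Y X))}"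
    using assms(3) unfolding n_cluster_tilting_def by auto
  define Y where "Y = (Frep src tgt (dv v) :: ('v, 'a, 'k) rep)"
  define I where "I = (Irep src tgt v :: ('v, 'a, 'k) rep)"
  have YC: "Y \<in> C"
  proof -
    have "Y \<in> {X. is_rep src tgt X \<and> (\<forall>i. 0 < i \<and> i < n \<longrightarrow> (\<forall>Y\<in>C. Ext_zero src tgt i X Y))}"
    proof (rule CollectI, intro conjI allI impI ballI)
      show "is_rep src tgt Y" unfolding Y_def by (rule is_rep_Frep)
      fix i Z assume "0 < i \<and> i < n" "Z \<in> C"
      then show "Ext_zero src tgt i Y Z" unfolding Y_def by (intro Ext_zero_projective projective_Frep) simp
    qed
    then show ?thesis by (rule subst[where P="\<lambda>S. Y \<in> S", OF C1[symmetric]])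
  qed
  have IC: "I \<in> C"
  proof -
    have "I \<in> {X. is_rep src tgt X \<and> (\<forall>i. 0 < i \<and> i < n \<longrightarrow> (\<forall>Y\<in>C. Ext_zero src tgt i Y X))}"
    proof (rule CollectI, intro conjI allI impI ballI)
      show "is_rep src tgt I" unfolding I_def by (rule is_rep_Irep)
      fix i Z assume "0 < i \<and> i < n" "Z \<in> C"
      then show "Ext_zero src tgt i Z I" unfolding I_def by (intro Ext_zero_Irep) simp
    qed
    then show ?thesis by (rule subst[where P="\<lambda>S. I \<in> S", OF C2[symmetric]])
  qed
  have IC1: "I \<in> {X. is_rep src tgt X \<and> (\<forall>i. 0 < i \<and> i < n \<longrightarrow> (\<forall>Y\<in>C. Ext_zero src tgt i X Y))}"
    by (rule subst[where P="\<lambda>S. I \<in> S", OF C1 IC])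
  have EXT: "Ext_zero src tgt i I Y" if "0 < i" "i < n" for i
    using IC1 YC that by simp
  have two: "\<exists>x y. x \<noteq> y \<and> P x \<and> P y" if "card {a::'a. P a} = 2" for P
    using that unfolding card_2_iff by auto
  have zero: "\<forall>a::'a. \<not> P a" if "\<not> 1 \<le> card {a::'a. P a}" for P
    using that by (rule zero_card_lemma)
  have partA: "outdeg src v = 2 \<Longrightarrow> 1 \<le> indeg tgt v"
  proof (rule ccontr)
    assume od: "outdeg src v = 2" and nid: "\<not> 1 \<le> indeg tgt v"
    obtain a1 a2 where a: "a1 \<noteq> a2" "src a1 = v" "src a2 = v" using two[OF od[unfolded outdeg_def]] by blast
    have noin: "\<And>a. tgt a \<noteq> v" using zero[OF nid[unfolded indeg_def]] by blast
    have R: "proj_resolution src tgt I (resP src tgt (dv v) (sig src tgt (dv v)))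
        (resd src tgt (ish src tgt (dv v)) (sig src tgt (dv v))) (cova src tgt v)"
      unfolding I_def by (rule cova_resolution[OF noin])
    obtain g where g: "is_hom src tgt (Frep src tgt (sig src tgt (dv v))) Y g"
      "hcomp (Frep src tgt (sig src tgt (dv v))) g (dmap src tgt (sig src tgt (dv v))) = zero_hom"
      "\<not> (\<exists>h. is_hom src tgt (Frep src tgt (dv v)) Y h \<and>
            hcomp (Frep src tgt (dv v)) h (dext (ish src tgt (dv v)) (sig src tgt (dv v))) = g)"
      using cocycle_GA[where src=src and tgt=tgt and m="dv v" and k="sig src tgt (dv v)" and \<iota>="ish src tgt (dv v)",
          OF a _ is_hom_dmap[unfolded dmap_def] ish_span] unfolding Y_def by (auto simp: dv_def)
    show False
      by (rule Ext_zero_contra[OF EXT[of 1] R]) (use g assms(2) in auto)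
  qed
  have partB: "indeg tgt v = 2 \<Longrightarrow> 1 \<le> outdeg src v"
  proof (rule ccontr)
    assume idg: "indeg tgt v = 2" and nod: "\<not> 1 \<le> outdeg src v"
    obtain b1 b2 where b: "b1 \<noteq> b2" "tgt b1 = v" "tgt b2 = v" using two[OF idg[unfolded indeg_def]] by blast
    have noout: "\<And>a. src a \<noteq> v" using zero[OF nod[unfolded outdeg_def]] by blast
    obtain k \<iota> where R: "proj_resolution src tgt I (resP src tgt (cnt src tgt v) k) (resd src tgt \<iota> k) (cov src tgt v)"
      and sp: "\<forall>x. x \<in> vspace (Fdim src tgt (cnt src tgt v) v) \<longrightarrow>
        mvec (Fdim src tgt (cnt src tgt v) v) ((cov src tgt v :: ('v, 'k) hom) v) x = (\<lambda>_. 0) \<longrightarrow>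
        (\<exists>w\<in>vspace (k v). mvec (k v) (\<iota> v) w = x)"
      using cov_resolution[where src=src and tgt=tgt and b=b1 and v=v, OF b(2)] unfolding I_def by blast
    define kp1 where "kp1 = cnt src tgt v v + rpos src tgt (cnt src tgt v) b1 + lb src tgt v b1"
    define kp2 where "kp2 = cnt src tgt v v + rpos src tgt (cnt src tgt v) b2 + lb src tgt v b2"
    have K: "(\<lambda>q. (if q = kp1 then 1 else 0) - (if q = kp2 then 1 else (0::'k))) \<in> vspace (Fdim src tgt (cnt src tgt v) v)
      \<and> mvec (Fdim src tgt (cnt src tgt v) v) ((cov src tgt v :: ('v, 'k) hom) v)
          (\<lambda>q. (if q = kp1 then 1 else 0) - (if q = kp2 then 1 else 0)) = (\<lambda>_. 0) \<and> kp1 \<noteq> kp2"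
      unfolding kp1_def kp2_def by (rule cov_kappa[OF b])
    then obtain w where w: "w \<in> vspace (k v)" "mvec (k v) (\<iota> v) w = (\<lambda>q. (if q = kp1 then 1 else 0) - (if q = kp2 then 1 else (0::'k)))"
      using sp by blast
    have w1: "mvec (k v) (\<iota> v) w kp1 = 1" using w(2) K by simp
    have mu0: "cnt src tgt v v = 0" unfolding cnt_def psum_def bI_def using noout by simp
    obtain g where g: "is_hom src tgt (Frep src tgt k) Y g"
      "hcomp (Frep src tgt k) g (dmap src tgt k) = zero_hom"
      "\<not> (\<exists>h. is_hom src tgt (Frep src tgt (cnt src tgt v)) Y h \<and>
            hcomp (Frep src tgt (cnt src tgt v)) h (dext \<iota> k) = g)"
      using cocycle_B[where src=src and tgt=tgt and \<mu>="cnt src tgt v" and k=k and \<iota>=\<iota> and v=v, OF noout mu0 w(1) w1]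
      unfolding Y_def by blast
    show False
      by (rule Ext_zero_contra[OF EXT[of 1] R]) (use g assms(2) in auto)
  qed
  have partC: "indeg tgt v = 2 \<Longrightarrow> outdeg src v = 2 \<Longrightarrow> n = 2"
  proof (rule ccontr)
    assume idg: "indeg tgt v = 2" and od: "outdeg src v = 2" and nn: "n \<noteq> 2"
    then have n3: "2 < n" using assms(2) by simp
    obtain a1 a2 where a: "a1 \<noteq> a2" "src a1 = v" "src a2 = v" using two[OF od[unfolded outdeg_def]] by blast
    obtain b1 b2 where b: "b1 \<noteq> b2" "tgt b1 = v" "tgt b2 = v" using two[OF idg[unfolded indeg_def]] by blast
    obtain k \<iota> where R: "proj_resolution src tgt I (resP src tgt (cnt src tgt v) k) (resd src tgt \<iota> k) (cov src tgt v)"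
      and sp: "\<forall>x. x \<in> vspace (Fdim src tgt (cnt src tgt v) v) \<longrightarrow>
        mvec (Fdim src tgt (cnt src tgt v) v) ((cov src tgt v :: ('v, 'k) hom) v) x = (\<lambda>_. 0) \<longrightarrow>
        (\<exists>w\<in>vspace (k v). mvec (k v) (\<iota> v) w = x)"
      using cov_resolution[where src=src and tgt=tgt and b=b1 and v=v, OF b(2)] unfolding I_def by blast
    define kp1 where "kp1 = cnt src tgt v v + rpos src tgt (cnt src tgt v) b1 + lb src tgt v b1"
    define kp2 where "kp2 = cnt src tgt v v + rpos src tgt (cnt src tgt v) b2 + lb src tgt v b2"
    have K: "(\<lambda>q. (if q = kp1 then 1 else 0) - (if q = kp2 then 1 else (0::'k))) \<in> vspace (Fdim src tgt (cnt src tgt v) v)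
      \<and> mvec (Fdim src tgt (cnt src tgt v) v) ((cov src tgt v :: ('v, 'k) hom) v)
          (\<lambda>q. (if q = kp1 then 1 else 0) - (if q = kp2 then 1 else 0)) = (\<lambda>_. 0) \<and> kp1 \<noteq> kp2"
      unfolding kp1_def kp2_def by (rule cov_kappa[OF b])
    then obtain w where w: "w \<in> vspace (k v)" "mvec (k v) (\<iota> v) w = (\<lambda>q. (if q = kp1 then 1 else 0) - (if q = kp2 then 1 else (0::'k)))"
      using sp by blast
    have kv: "0 < k v"
    proof (rule ccontr)
      assume "\<not> 0 < k v"
      then have "mvec (k v) (\<iota> v) w = (\<lambda>_. 0)" unfolding mvec_def by simp
      then show False using fun_cong[OF w(2), of kp1] K by simp
    qed
    obtain g where g: "is_hom src tgt (Frep src tgt (sig src tgt k)) Y g"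
      "hcomp (Frep src tgt (sig src tgt k)) g (dmap src tgt (sig src tgt k)) = zero_hom"
      "\<not> (\<exists>h. is_hom src tgt (Frep src tgt k) Y h \<and>
            hcomp (Frep src tgt k) h (dext (ish src tgt k) (sig src tgt k)) = g)"
      using cocycle_GA[where src=src and tgt=tgt and m=k and k="sig src tgt k" and \<iota>="ish src tgt k",
          OF a kv is_hom_dmap[unfolded dmap_def] ish_span] unfolding Y_def by blast
    show False
      by (rule Ext_zero_contra[OF EXT[of 2] R]) (use g n3 in \<open>auto simp: dmap_def numeral_2_eq_2\<close>)
  qed
  show ?thesis using partA partB partC by blast
qed

end
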